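(* In the setting below, any two primitive isometric embeddings of $P(-1)$ into the Niemeier lattice $N$ of type $A_2^{12}$ differ by an automorphism of $N$: if $\iota_1,\iota_2\colon P(-1)\hookrightarrow N$ are primitive embeddings, there is $\Phi\in\mathrm{Aut}(N)$ with $\Phi\circ\iota_1=\iota_2$.
   Context: $X$ is the minimal resolution of $T/\mathbb Z_3$, where $T=\mathbb C^2/L$, $L$ generated by $(1,0),(\xi,0),(0,1),(0,\xi)$, $\xi=e^{2\pi i/3}$, and $\mathbb Z_3$ acts via $(z_1,z_2)\mapsto(\xi z_1,\xi^{-1}z_2)$. $R\subset H^2(X,\mathbb Z)$ is spanned by the Poincaré duals of the 18 exceptional $(-2)$-curves (type $A_2^9$), $P=(R\otimes\mathbb Q)\cap H^2(X,\mathbb Z)$ with the intersection form, and $P(-1)$ is $P$ with form negated (positive definite of rank 18). $N$ is the Niemeier lattice with root system $A_2^{12}$ (the unique up to isometry even unimodular positive definite rank-24 lattice with that root system). An embedding is primitive if the quotient of $N$ by the image is torsion-free. *)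

theory Defs
  imports "HOL-Analysis.Analysis" "HOL-Library.Numeral_Type"
begin

text \<open>A full-rank lattice in real^24 (the positive definite form is the standard dot product).\<close>
definition full_lattice24 :: "(real^24) set \<Rightarrow> bool" where
  "full_lattice24 L \<longleftrightarrow>
     (\<exists>f :: 24 \<Rightarrow> real^24. span (range f) = UNIV \<and>
        L = range (\<lambda>c :: 24 \<Rightarrow> int. \<Sum>i\<in>UNIV. of_int (c i) *\<^sub>R f i))"

definition even_unimodular24 :: "(real^24) set \<Rightarrow> bool" where
  "even_unimodular24 L \<longleftrightarrow> full_lattice24 L
     \<and> (\<forall>x. (\<forall>y\<in>L. x \<bullet> y \<in> \<int>) \<longleftrightarrow> x \<in> L)
     \<and> (\<forall>x\<in>L. \<exists>k::int. x \<bullet> x = 2 * of_int k)"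

definition lattice_roots :: "('a::real_inner) set \<Rightarrow> 'a set" where
  "lattice_roots L = {v\<in>L. v \<bullet> v = 2}"

definition root_system_A2_12 :: "(real^24) set \<Rightarrow> bool" where
  "root_system_A2_12 L \<longleftrightarrow>
     (\<exists>a b :: 12 \<Rightarrow> real^24.
        (\<forall>i. a i \<bullet> a i = 2 \<and> b i \<bullet> b i = 2 \<and> a i \<bullet> b i = -1) \<and>
        (\<forall>i j. i \<noteq> j \<longrightarrow> a i \<bullet> a j = 0 \<and> a i \<bullet> b j = 0 \<and> b i \<bullet> b j = 0) \<and>
        lattice_roots L = (\<Union>i. {a i, - a i, b i, - b i, a i + b i, - (a i + b i)}))"

definition niemeier_A2_12 :: "(real^24) set \<Rightarrow> bool" where
  "niemeier_A2_12 N \<longleftrightarrow> even_unimodular24 N \<and> root_system_A2_12 N"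

definition lattice_aut :: "(real^24) set \<Rightarrow> (real^24 \<Rightarrow> real^24) \<Rightarrow> bool" where
  "lattice_aut N \<Phi> \<longleftrightarrow> orthogonal_transformation \<Phi> \<and> \<Phi> ` N = N"

text \<open>A block of A_2^* inside the sum-zero hyperplane of real^3.\<close>
definition A2dual_block :: "real^3 \<Rightarrow> bool" where
  "A2dual_block y \<longleftrightarrow> y$0 + y$1 + y$2 = 0 \<and> (\<forall>i j. y$i - y$j \<in> \<int>)"

text \<open>Class of an A_2^* vector in A_2^*/A_2 = Z/3.\<close>
definition A2_glue :: "real^3 \<Rightarrow> 3" where
  "A2_glue y = of_int \<lfloor>3 * y$0\<rfloor>"

text \<open>P(-1): the A_2^9 lattice (blocks indexed by the 9 fixed points, identified with
  F_3^2 = 3 \<times> 3) glued along the ternary code of affine functions on F_3^2.\<close>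
definition P_lattice :: "(real^3^(3 \<times> 3)) set" where
  "P_lattice = {x. (\<forall>p. A2dual_block (x$p)) \<and>
     (\<exists>\<alpha> \<beta> \<gamma> :: 3. \<forall>a b. A2_glue (x$(a,b)) = \<alpha> * a + \<beta> * b + \<gamma>)}"

definition isometric_embedding ::
  "('a::real_inner \<Rightarrow> 'b::real_inner) \<Rightarrow> 'a set \<Rightarrow> 'b set \<Rightarrow> bool" where
  "isometric_embedding \<iota> M N \<longleftrightarrow> \<iota> ` M \<subseteq> N
     \<and> (\<forall>x\<in>M. \<forall>y\<in>M. \<iota> (x + y) = \<iota> x + \<iota> y)
     \<and> (\<forall>x\<in>M. \<forall>y\<in>M. \<iota> x \<bullet> \<iota> y = x \<bullet> y)"

definition primitive_embedding ::
  "('a::real_inner \<Rightarrow> 'b::real_inner) \<Rightarrow> 'a set \<Rightarrow> 'b set \<Rightarrow> bool" where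
  "primitive_embedding \<iota> M N \<longleftrightarrow> isometric_embedding \<iota> M N
     \<and> (\<forall>v\<in>N. \<forall>n::int. n \<noteq> 0 \<and> of_int n *\<^sub>R v \<in> \<iota> ` M \<longrightarrow> v \<in> \<iota> ` M)"

end

theory Submission
  imports Defs
begin

lemma F3_cases: "(x::3) = 0 \<or> x = 1 \<or> x = -1"
proof -
  have "x = 1 \<or> x = 2 \<or> x = 3" by (rule exhaust_3)
  moreover have "(2::3) = -1" by simp
  moreover have "(3::3) = 0" by simp
  ultimately show ?thesis by auto
qed

lemma F3_sq: "(x::3) \<noteq> 0 \<Longrightarrow> x * x = 1"
  using F3_cases[of x] by auto

lemma F3_sq01: "(x::3) * x = 0 \<or> (x::3) * x = 1"
  using F3_cases[of x] by auto

lemma F3_mult_nz: "(x::3) \<noteq> 0 \<Longrightarrow> y \<noteq> 0 \<Longrightarrow> x * y \<noteq> 0"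
  using F3_cases[of x] F3_cases[of y] by auto

lemma F3_three: "(x::3) + x + x = 0"
proof -
  have "x + x + x = 3 * x" by (simp add: algebra_simps)
  also have "(3::3) = 0" by simp
  finally show ?thesis by simp
qed

lemma F3_sq_sum1:
  fixes x y z :: 3
  assumes "x*x + y*y + z*z = 1"
  shows "(x \<noteq> 0 \<and> y = 0 \<and> z = 0) \<or> (x = 0 \<and> y \<noteq> 0 \<and> z = 0) \<or> (x = 0 \<and> y = 0 \<and> z \<noteq> 0)"
  using assms F3_cases[of x] F3_cases[of y] F3_cases[of z] by auto

lemma cramer3: fixes p q r u1 u2 u3 v1 v2 v3 w1 w2 w3 :: "'a::comm_ring_1"
  defines "D \<equiv> (u2* v3 - u3* v2)*w1+(u3* v1 - u1* v3)*w2+(u1* v2 - u2* v1)*w3"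
  and "k \<equiv> (p*(v2*w3-v3*w2) + q*(v3*w1-v1*w3) + r*(v1*w2-v2*w1))"
  and "l \<equiv> (u1*(q*w3-r*w2) + u2*(r*w1-p*w3) + u3*(p*w2-q*w1))"
  and "m \<equiv> (u1*(v2*r-v3*q) + u2*(v3*p-v1*r) + u3*(v1*q-v2*p))"
  shows "k*u1+l* v1+m*w1 = D*p" "k*u2+l* v2+m*w2 = D*q" "k*u3+l* v3+m*w3 = D*r"
  unfolding D_def k_def l_def m_def by (simp_all add: algebra_simps)

lemma triple_id: fixes u1 u2 u3 y1 y2 y3 a b c :: "'a::comm_ring_1"
  shows "(u2*y3 - u3*y2)*a+(u3*y1 - u1*y3)*b+(u1*y2 - u2*y1)*c = -((u2*c - u3*b)*y1 + (u3*a - u1*c)*y2 + (u1*b - u2*a)*y3)"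
  by (simp add: algebra_simps)

lemma span3:
  fixes U :: "(3 \<times> 3 \<times> 3) set"
  assumes U0: "(0,0,0) \<in> U"
    and Uadd: "\<And>a b c d e f. (a,b,c) \<in> U \<Longrightarrow> (d,e,f) \<in> U \<Longrightarrow> (a+d, b+e, c+f) \<in> U"
    and Uorth: "\<And>x y z. (\<forall>a b c. (a,b,c) \<in> U \<longrightarrow> x*a+y*b+z*c = 0) \<Longrightarrow> x = 0 \<and> y = 0 \<and> z = 0"
  shows "(p,q,r) \<in> U"
proof -
  have Usm: "(k*a, k*b, k*c) \<in> U" if "(a,b,c) \<in> U" for k a b c
  proof -
    have "k = 0 \<or> k = 1 \<or> k = -1" by (rule F3_cases)
    moreover have "(-a,-b,-c) \<in> U"
    proof -
      have "(a+a,b+b,c+c) \<in> U" using Uadd that by blast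
      moreover have "a + a = -a" "b+b = -b" "c+c = -c" using F3_three 
        by (metis add.assoc add_eq_0_iff)+
      ultimately show ?thesis by metis
    qed
    ultimately show ?thesis using U0 that by auto
  qed
  have Ulin: "(k*a+l*d+m*g, k*b+l*e+m*h, k*c+l*f+m*i) \<in> U"
    if "(a,b,c) \<in> U" "(d,e,f) \<in> U" "(g,h,i) \<in> U" for k l m a b c d e f g h i
    using Uadd Usm that by (metis)
  obtain u1 u2 u3 where u: "(u1,u2,u3) \<in> U" "\<not> (u1 = 0 \<and> u2 = 0 \<and> u3 = 0)"
  proof -
    have "\<not> (\<forall>a b c. (a,b,c) \<in> U \<longrightarrow> 1*a+0*b+0*c = (0::3))"
      using Uorth[of 1 0 0] by auto
    then show ?thesis using that by fastforce
  qed
  obtain v1 v2 v3 where v: "(v1,v2,v3) \<in> U"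
    and nz: "\<not> (u2* v3 - u3* v2 = 0 \<and> u3* v1 - u1* v3 = 0 \<and> u1* v2 - u2* v1 = 0)"
  proof (rule ccontr)
    assume H: "\<not> thesis"
    have par: "u2* v3 - u3* v2 = 0 \<and> u3* v1 - u1* v3 = 0 \<and> u1* v2 - u2* v1 = 0" if "(v1,v2,v3) \<in> U" for v1 v2 v3
      using H that \<open>\<And>v1 v2 v3. (v1,v2,v3) \<in> U \<Longrightarrow> \<not> _ \<Longrightarrow> thesis\<close> by blast
    have "\<exists>y1 y2 y3 :: 3. \<not> (u2*y3 - u3*y2 = 0 \<and> u3*y1 - u1*y3 = 0 \<and> u1*y2 - u2*y1 = 0)"
    proof (cases "u1 = 0")
      case True
      then have "u2 \<noteq> 0 \<or> u3 \<noteq> 0" using u by auto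
      then show ?thesis using True by (intro exI[of _ 1] exI[of _ 0]) auto
    next
      case False
      then show ?thesis by (intro exI[of _ 0] exI[of _ 1] exI[of _ 0]) auto
    qed
    then obtain y1 y2 y3 :: 3 where ny: "\<not> (u2*y3 - u3*y2 = 0 \<and> u3*y1 - u1*y3 = 0 \<and> u1*y2 - u2*y1 = 0)"
      by blast
    define n1 where "n1 = u2*y3 - u3*y2"
    define n2 where "n2 = u3*y1 - u1*y3"
    define n3 where "n3 = u1*y2 - u2*y1"
    have "\<forall>a b c. (a,b,c) \<in> U \<longrightarrow> n1*a+n2*b+n3*c = 0"
    proof (intro allI impI)
      fix a b c assume "(a,b,c) \<in> U"
      from par[OF this] have p: "u2*c - u3*b = 0" "u3*a - u1*c = 0" "u1*b - u2*a = 0" by auto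
      have "n1*a+n2*b+n3*c = -((u2*c - u3*b)*y1 + (u3*a - u1*c)*y2 + (u1*b - u2*a)*y3)"
        unfolding n1_def n2_def n3_def by (rule triple_id)
      then show "n1*a+n2*b+n3*c = 0" using p by simp
    qed
    from Uorth[OF this] ny show False unfolding n1_def n2_def n3_def by auto
  qed
  define n1 where "n1 = u2* v3 - u3* v2"
  define n2 where "n2 = u3* v1 - u1* v3"
  define n3 where "n3 = u1* v2 - u2* v1"
  obtain w1 w2 w3 where w: "(w1,w2,w3) \<in> U" and D: "n1*w1+n2*w2+n3*w3 \<noteq> 0"
    using Uorth[of n1 n2 n3] nz unfolding n1_def n2_def n3_def by blast
  define D where "D = n1*w1+n2*w2+n3*w3"
  have DD: "D * D = 1" using D F3_sq unfolding D_def by blast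
  define k0 where "k0 = (p*(v2*w3-v3*w2) + q*(v3*w1-v1*w3) + r*(v1*w2-v2*w1))"
  define l0 where "l0 = (u1*(q*w3-r*w2) + u2*(r*w1-p*w3) + u3*(p*w2-q*w1))"
  define m0 where "m0 = (u1*(v2*r-v3*q) + u2*(v3*p-v1*r) + u3*(v1*q-v2*p))"
  define k where "k = D * k0"
  define l where "l = D * l0"
  define m where "m = D * m0"
  have DD': "D = (u2* v3 - u3* v2)*w1+(u3* v1 - u1* v3)*w2+(u1* v2 - u2* v1)*w3"
    unfolding D_def n1_def n2_def n3_def by (simp add: algebra_simps)
  have e1: "k0*u1+l0* v1+m0*w1 = D*p" unfolding k0_def l0_def m0_def DD' by (simp add: algebra_simps)
  have e2: "k0*u2+l0* v2+m0*w2 = D*q" unfolding k0_def l0_def m0_def DD' by (simp add: algebra_simps)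
  have e3: "k0*u3+l0* v3+m0*w3 = D*r" unfolding k0_def l0_def m0_def DD' by (simp add: algebra_simps)
  have c1: "k*u1+l* v1+m*w1 = (D*D) * p"
    using arg_cong[OF e1, of "\<lambda>x. D*x"] unfolding k_def l_def m_def by (simp add: algebra_simps)
  have c2: "k*u2+l* v2+m*w2 = (D*D) * q"
    using arg_cong[OF e2, of "\<lambda>x. D*x"] unfolding k_def l_def m_def by (simp add: algebra_simps)
  have c3: "k*u3+l* v3+m*w3 = (D*D) * r"
    using arg_cong[OF e3, of "\<lambda>x. D*x"] unfolding k_def l_def m_def by (simp add: algebra_simps)
  show ?thesis using Ulin[OF u(1) v w, of k l m] c1 c2 c3 DD by simp
qed

lemma sum_UNIV_out:
  fixes f :: "'n::finite \<Rightarrow> 'a::comm_monoid_add"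
  assumes "\<And>k. k \<in> T \<Longrightarrow> f k = 0"
  shows "(\<Sum>k\<in>UNIV. f k) = (\<Sum>k\<in>-T. f k)"
  by (rule sum.mono_neutral_right) (auto simp: assms)

lemma sum_UNIV_split:
  fixes f :: "'n::finite \<Rightarrow> 'a::comm_monoid_add"
  shows "(\<Sum>k\<in>UNIV. f k) = (\<Sum>k\<in>T. f k) + (\<Sum>k\<in>-T. f k)"
proof -
  have "UNIV = T \<union> -T" by auto
  then have "(\<Sum>k\<in>UNIV. f k) = (\<Sum>k\<in>T \<union> -T. f k)" by simp
  also have "\<dots> = (\<Sum>k\<in>T. f k) + (\<Sum>k\<in>-T. f k)"
    by (rule sum.union_disjoint) auto
  finally show ?thesis .
qed

lemma sum3_delta:
  fixes f :: "'n \<Rightarrow> 'a::comm_ring_1"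
  assumes "finite T" "t \<in> T" "\<And>s. s \<in> T \<Longrightarrow> s \<noteq> t \<Longrightarrow> f s = 0"
  shows "(\<Sum>s\<in>T. f s) = f t"
proof -
  have "(\<Sum>s\<in>T. f s) = (\<Sum>s\<in>{t}. f s)"
    by (rule sum.mono_neutral_right) (use assms in auto)
  then show ?thesis by simp
qed

locale tcode =
  fixes C :: "('n::finite \<Rightarrow> 3) set"
  assumes C0: "(\<lambda>i. 0) \<in> C"
    and Cadd: "\<And>c d. c \<in> C \<Longrightarrow> d \<in> C \<Longrightarrow> (\<lambda>i. c i + d i) \<in> C"
    and Corth: "\<And>c d. c \<in> C \<Longrightarrow> d \<in> C \<Longrightarrow> (\<Sum>i\<in>UNIV. c i * d i) = 0"
    and Cdual: "\<And>u. (\<And>c. c \<in> C \<Longrightarrow> (\<Sum>i\<in>UNIV. u i * c i) = 0) \<Longrightarrow> u \<in> C"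
    and Cmin: "\<And>c. c \<in> C \<Longrightarrow> card {i. c i \<noteq> 0} \<le> 3 \<Longrightarrow> c = (\<lambda>i. 0)"
begin

lemma Csmul: "c \<in> C \<Longrightarrow> (\<lambda>i. k * c i) \<in> C"
proof -
  assume c: "c \<in> C"
  have cc: "(\<lambda>i. c i + c i) \<in> C" using Cadd[OF c c] .
  have "k = 0 \<or> k = 1 \<or> k = -1" by (rule F3_cases)
  moreover have "(\<lambda>i. c i + c i) = (\<lambda>i. - c i)"
    using F3_three by (metis add.assoc add_eq_0_iff)
  ultimately show ?thesis using C0 c cc by auto
qed

lemma Cdiff: "c \<in> C \<Longrightarrow> d \<in> C \<Longrightarrow> (\<lambda>i. c i - d i) \<in> C"
  using Cadd[of c "\<lambda>i. (-1) * d i"] Csmul[of d "-1"] by simp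

lemma Csum: "finite F \<Longrightarrow> (\<And>t. t \<in> F \<Longrightarrow> f t \<in> C) \<Longrightarrow> (\<lambda>i. \<Sum>t\<in>F. k t * f t i) \<in> C"
proof (induction F rule: finite_induct)
  case empty then show ?case using C0 by simp
next
  case (insert x F)
  have "(\<lambda>i. k x * f x i + (\<Sum>t\<in>F. k t * f t i)) \<in> C"
    using Cadd[OF Csmul[of "f x" "k x"] insert.IH] insert.prems by auto
  then show ?case using insert.hyps by simp
qed

lemma Csupp: "c \<in> C \<Longrightarrow> (\<And>i. i \<notin> T \<Longrightarrow> c i = 0) \<Longrightarrow> card T \<le> 3 \<Longrightarrow> c = (\<lambda>i. 0)"
proof -
  assume c: "c \<in> C" and s: "\<And>i. i \<notin> T \<Longrightarrow> c i = 0" and T: "card T \<le> 3"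
  have "{i. c i \<noteq> 0} \<subseteq> T" using s by auto
  then have "card {i. c i \<noteq> 0} \<le> card T" by (intro card_mono) auto
  then show ?thesis using Cmin[OF c] T by simp
qed

lemma surj:
  assumes T: "card T = 3" and t: "t \<in> T"
  shows "\<exists>c\<in>C. c t = 1 \<and> (\<forall>s\<in>T. s \<noteq> t \<longrightarrow> c s = 0)"
proof -
  obtain t1 t2 t3 where T3: "T = {t1,t2,t3}" "t1 \<noteq> t2" "t2 \<noteq> t3" "t1 \<noteq> t3"
    using T card_3_iff by metis
  define U where "U = {(c t1, c t2, c t3) | c. c \<in> C}"
  have key: "(p,q,r) \<in> U" for p q r
  proof (rule span3)
    show "(0,0,0) \<in> U" unfolding U_def using C0 by force
    show "(a+d, b+e, g+f) \<in> U" if "(a,b,g) \<in> U" "(d,e,f) \<in> U" for a b g d e f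
    proof -
      from that(1) obtain c1 where c1: "c1 \<in> C" "a = c1 t1" "b = c1 t2" "g = c1 t3" unfolding U_def by blast
      from that(2) obtain c2 where c2: "c2 \<in> C" "d = c2 t1" "e = c2 t2" "f = c2 t3" unfolding U_def by blast
      have "(\<lambda>i. c1 i + c2 i) \<in> C" using Cadd c1 c2 by blast
      then show ?thesis unfolding U_def using c1 c2
        by (intro CollectI exI[of _ "\<lambda>i. c1 i + c2 i"]) simp
    qed
    show "x = 0 \<and> y = 0 \<and> z = 0" if H: "\<forall>a b c. (a,b,c) \<in> U \<longrightarrow> x*a+y*b+z*c = 0" for x y z
    proof -
      define u where "u = (\<lambda>i. (if i = t1 then x else 0) + (if i = t2 then y else 0) + (if i = t3 then z else 0))"
      have "u \<in> C"
      proof (rule Cdual)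
        fix c assume c: "c \<in> C"
        have e: "u i * c i = (if i = t1 then x * c i else 0) + (if i = t2 then y*c i else 0) + (if i = t3 then z * c i else 0)" for i
          by (simp add: u_def distrib_right)
        have "(\<Sum>i\<in>UNIV. u i * c i) = x * c t1 + y * c t2 + z * c t3"
          unfolding e by (simp add: sum.distrib)
        also have "\<dots> = 0" using H c unfolding U_def by blast
        finally show "(\<Sum>i\<in>UNIV. u i * c i) = 0" .
      qed
      moreover have "u i = 0" if "i \<notin> T" for i using that T3 unfolding u_def by auto
      ultimately have "u = (\<lambda>i. 0)" using Csupp[of u T] T by simp
      then have "u t1 = 0" "u t2 = 0" "u t3 = 0" by auto
      then show ?thesis using T3 unfolding u_def by auto
    qed
  qed
  have "t = t1 \<or> t = t2 \<or> t = t3" using t T3 by auto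
  then show ?thesis
  proof (elim disjE)
    assume "t = t1"
    with key[of 1 0 0] show ?thesis unfolding U_def using T3 by force
  next
    assume "t = t2"
    with key[of 0 1 0] show ?thesis unfolding U_def using T3 by force
  next
    assume "t = t3"
    with key[of 0 0 1] show ?thesis unfolding U_def using T3 by force
  qed
qed


theorem code_extend:
  fixes T1 T2 :: "'n set" and \<rho> :: "'n \<Rightarrow> 'n" and \<delta> :: "'n \<Rightarrow> 3"
  assumes T1: "card T1 = 3" and T2: "card T2 = 3"
    and rho: "bij_betw \<rho> (-T1) (-T2)"
    and dd: "\<And>j. \<delta> j * \<delta> j = 1"
    and H12: "\<And>c. c \<in> C \<Longrightarrow> (\<forall>t\<in>T1. c t = 0) \<Longrightarrow>
       \<exists>c'\<in>C. (\<forall>t\<in>T2. c' t = 0) \<and> (\<forall>j\<in>-T1. c' (\<rho> j) = \<delta> j * c j)"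
    and H21: "\<And>c'. c' \<in> C \<Longrightarrow> (\<forall>t\<in>T2. c' t = 0) \<Longrightarrow>
       \<exists>c\<in>C. (\<forall>t\<in>T1. c t = 0) \<and> (\<forall>j\<in>-T1. c' (\<rho> j) = \<delta> j * c j)"
  shows "\<exists>\<tau> \<epsilon>. bij_betw \<tau> T1 T2 \<and> (\<forall>t. \<epsilon> t * \<epsilon> t = 1) \<and>
     (\<forall>c\<in>C. \<exists>c'\<in>C. (\<forall>j\<in>-T1. c' (\<rho> j) = \<delta> j * c j) \<and> (\<forall>t\<in>T1. c' (\<tau> t) = \<epsilon> t * c t))"
proof -
  have fin1: "finite T1" and fin2: "finite T2" by auto
  have "\<forall>t\<in>T1. \<exists>c\<in>C. c t = 1 \<and> (\<forall>s\<in>T1. s \<noteq> t \<longrightarrow> c s = 0)"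
    using surj[OF T1] by blast
  then obtain ct where ct: "\<And>t. t \<in> T1 \<Longrightarrow> ct t \<in> C \<and> ct t t = 1 \<and> (\<forall>s\<in>T1. s \<noteq> t \<longrightarrow> ct t s = 0)"
    by metis
  have "\<forall>t\<in>T2. \<exists>c\<in>C. c t = 1 \<and> (\<forall>s\<in>T2. s \<noteq> t \<longrightarrow> c s = 0)"
    using surj[OF T2] by blast
  then obtain dt where dt: "\<And>t. t \<in> T2 \<Longrightarrow> dt t \<in> C \<and> dt t t = 1 \<and> (\<forall>s\<in>T2. s \<noteq> t \<longrightarrow> dt t s = 0)"
    by metis
  define \<rho>' where "\<rho>' = inv_into (-T1) \<rho>"
  have rr: "\<rho>' k \<in> -T1 \<and> \<rho> (\<rho>' k) = k" if "k \<in> -T2" for k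
    using rho that unfolding \<rho>'_def
    by (metis bij_betw_def f_inv_into_f inv_into_into)
  have rr2: "\<rho> j \<in> -T2 \<and> \<rho>' (\<rho> j) = j" if "j \<in> -T1" for j
    using rho that unfolding \<rho>'_def
    by (metis bij_betw_def bij_betw_inv_into_left bij_betwE)
  define W where "W t k = (if k \<in> T2 then 0 else \<delta> (\<rho>' k) * ct t (\<rho>' k))" for t k
  have Wsum: "(\<Sum>k\<in>UNIV. W t k * f k) = (\<Sum>j\<in>-T1. \<delta> j * ct t j * f (\<rho> j))" for t f
  proof -
    have "(\<Sum>k\<in>UNIV. W t k * f k) = (\<Sum>k\<in>-T2. W t k * f k)"
      by (rule sum_UNIV_out) (simp add: W_def)
    also have "\<dots> = (\<Sum>j\<in>-T1. W t (\<rho> j) * f (\<rho> j))"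
      by (rule sum.reindex_bij_betw[OF rho, symmetric])
    also have "\<dots> = (\<Sum>j\<in>-T1. \<delta> j * ct t j * f (\<rho> j))"
      by (rule sum.cong) (use rr2 in \<open>auto simp: W_def\<close>)
    finally show ?thesis .
  qed
  have Lperp: "(\<Sum>k\<in>UNIV. W t k * c k) = 0"
    if t: "t \<in> T1" and c: "c \<in> C" and cz: "\<forall>s\<in>T2. c s = 0" for t c
  proof -
    obtain c'' where c'': "c'' \<in> C" "\<forall>s\<in>T1. c'' s = 0" "\<forall>j\<in>-T1. c (\<rho> j) = \<delta> j * c'' j"
      using H21[OF c cz] by blast
    have "(\<Sum>k\<in>UNIV. W t k * c k) = (\<Sum>j\<in>-T1. \<delta> j * ct t j * c (\<rho> j))" by (rule Wsum)
    also have "\<dots> = (\<Sum>j\<in>-T1. ct t j * c'' j)"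
    proof (rule sum.cong)
      fix j assume "j \<in> -T1"
      then have "\<delta> j * ct t j * c (\<rho> j) = (\<delta> j * \<delta> j) * ct t j * c'' j" using c'' by (simp add: algebra_simps)
      then show "\<delta> j * ct t j * c (\<rho> j) = ct t j * c'' j" using dd by simp
    qed simp
    also have "\<dots> = (\<Sum>j\<in>UNIV. ct t j * c'' j)"
      by (rule sum_UNIV_out[symmetric]) (use c'' in auto)
    also have "\<dots> = 0" using Corth ct[OF t] c'' by blast
    finally show ?thesis .
  qed
  define u' where "u' t k = - (\<Sum>i\<in>UNIV. W t i * dt k i)" for t k
  define cp where "cp t = (\<lambda>k. if k \<in> T2 then u' t k else W t k)" for t
  have cpC: "cp t \<in> C" if t: "t \<in> T1" for t
  proof (rule Cdual)
    fix c assume c: "c \<in> C"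
    define cres where "cres = (\<lambda>i. c i - (\<Sum>k\<in>T2. c k * dt k i))"
    have "cres \<in> C" unfolding cres_def
      by (rule Cdiff[OF c Csum]) (use fin2 dt in auto)
    moreover have "\<forall>s\<in>T2. cres s = 0"
    proof
      fix s assume s: "s \<in> T2"
      have "(\<Sum>k\<in>T2. c k * dt k s) = c s * dt s s"
        by (rule sum3_delta[OF fin2 s]) (use dt s in auto)
      then show "cres s = 0" using dt[OF s] unfolding cres_def by simp
    qed
    ultimately have z: "(\<Sum>i\<in>UNIV. W t i * cres i) = 0" using Lperp[OF t] by blast
    have "(\<Sum>i\<in>UNIV. W t i * cres i) = (\<Sum>i\<in>UNIV. W t i * c i) - (\<Sum>i\<in>UNIV. \<Sum>k\<in>T2. W t i * (c k * dt k i))"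
      unfolding cres_def by (simp add: algebra_simps sum_subtractf sum_distrib_left)
    also have "(\<Sum>i\<in>UNIV. \<Sum>k\<in>T2. W t i * (c k * dt k i)) = (\<Sum>k\<in>T2. c k * (\<Sum>i\<in>UNIV. W t i * dt k i))"
      by (subst sum.swap) (simp add: sum_distrib_left algebra_simps)
    also have "\<dots> = - (\<Sum>k\<in>T2. c k * u' t k)"
      unfolding u'_def by (simp add: sum_negf)
    finally have e1: "(\<Sum>i\<in>UNIV. W t i * c i) = - (\<Sum>k\<in>T2. c k * u' t k)" using z by (simp add: eq_neg_iff_add_eq_0)
    have "(\<Sum>i\<in>UNIV. cp t i * c i) = (\<Sum>i\<in>T2. cp t i * c i) + (\<Sum>i\<in>-T2. cp t i * c i)"
      by (rule sum_UNIV_split)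
    also have "(\<Sum>i\<in>T2. cp t i * c i) = (\<Sum>k\<in>T2. c k * u' t k)"
      by (rule sum.cong) (auto simp: cp_def)
    also have "(\<Sum>i\<in>-T2. cp t i * c i) = (\<Sum>i\<in>-T2. W t i * c i)"
      by (rule sum.cong) (auto simp: cp_def)
    also have "\<dots> = (\<Sum>i\<in>UNIV. W t i * c i)"
      by (rule sum_UNIV_out[symmetric]) (simp add: W_def)
    finally show "(\<Sum>i\<in>UNIV. cp t i * c i) = 0" using e1 by simp
  qed
  have gram: "(\<Sum>k\<in>T2. u' t k * u' s k) = (if t = s then 1 else 0)"
    if t: "t \<in> T1" and s: "s \<in> T1" for t s
  proof -
    have A: "(\<Sum>k\<in>UNIV. cp t k * cp s k) = 0" using Corth cpC t s by blast
    have "(\<Sum>k\<in>UNIV. cp t k * cp s k) = (\<Sum>k\<in>T2. cp t k * cp s k) + (\<Sum>k\<in>-T2. cp t k * cp s k)"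
      by (rule sum_UNIV_split)
    also have "(\<Sum>k\<in>T2. cp t k * cp s k) = (\<Sum>k\<in>T2. u' t k * u' s k)"
      by (rule sum.cong) (auto simp: cp_def)
    also have "(\<Sum>k\<in>-T2. cp t k * cp s k) = (\<Sum>k\<in>-T2. W t k * W s k)"
      by (rule sum.cong) (auto simp: cp_def)
    also have "\<dots> = (\<Sum>k\<in>UNIV. W t k * W s k)"
      by (rule sum_UNIV_out[symmetric]) (simp add: W_def)
    also have "\<dots> = (\<Sum>j\<in>-T1. \<delta> j * ct t j * W s (\<rho> j))" by (rule Wsum)
    also have "\<dots> = (\<Sum>j\<in>-T1. ct t j * ct s j)"
    proof (rule sum.cong)
      fix j assume j: "j \<in> -T1"
      have "W s (\<rho> j) = \<delta> j * ct s j" using rr2[OF j] by (simp add: W_def)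
      then have "\<delta> j * ct t j * W s (\<rho> j) = (\<delta> j * \<delta> j) * (ct t j * ct s j)" by (simp add: algebra_simps)
      then show "\<delta> j * ct t j * W s (\<rho> j) = ct t j * ct s j" using dd by simp
    qed simp
    finally have B: "(\<Sum>k\<in>T2. u' t k * u' s k) + (\<Sum>j\<in>-T1. ct t j * ct s j) = 0" using A by simp
    have "(\<Sum>j\<in>UNIV. ct t j * ct s j) = 0" using Corth ct t s by blast
    moreover have "(\<Sum>j\<in>UNIV. ct t j * ct s j) = (\<Sum>j\<in>T1. ct t j * ct s j) + (\<Sum>j\<in>-T1. ct t j * ct s j)"
      by (rule sum_UNIV_split)
    moreover have "(\<Sum>j\<in>T1. ct t j * ct s j) = ct t t * ct s t"
      by (rule sum3_delta[OF fin1 t]) (use ct[OF t] in auto)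
    moreover have "ct t t * ct s t = (if t = s then 1 else 0)" using ct t s by auto
    ultimately have "(\<Sum>j\<in>-T1. ct t j * ct s j) = - (if t = s then 1 else 0)"
      by (simp add: eq_neg_iff_add_eq_0 add.commute)
    then show ?thesis using B by (simp add: add_eq_0_iff)
  qed
  obtain k1 k2 k3 where K: "T2 = {k1,k2,k3}" "k1 \<noteq> k2" "k2 \<noteq> k3" "k1 \<noteq> k3"
    using T2 card_3_iff by metis
  have ex1: "\<exists>k\<in>T2. u' t k \<noteq> 0 \<and> (\<forall>k'\<in>T2. k' \<noteq> k \<longrightarrow> u' t k' = 0)" if t: "t \<in> T1" for t
  proof -
    have "u' t k1 * u' t k1 + u' t k2 * u' t k2 + u' t k3 * u' t k3 = 1"
      using gram[OF t t] K by (simp add: add.assoc)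
    from F3_sq_sum1[OF this] show ?thesis using K by auto
  qed
  define \<tau> where "\<tau> t = (SOME k. k\<in>T2 \<and> u' t k \<noteq> 0 \<and> (\<forall>k'\<in>T2. k' \<noteq> k \<longrightarrow> u' t k' = 0))" for t
  have tau: "\<tau> t \<in> T2 \<and> u' t (\<tau> t) \<noteq> 0 \<and> (\<forall>k'\<in>T2. k' \<noteq> \<tau> t \<longrightarrow> u' t k' = 0)" if t: "t \<in> T1" for t
    unfolding \<tau>_def by (rule someI_ex) (use ex1[OF t] in blast)
  define \<epsilon> where "\<epsilon> t = (if t \<in> T1 then u' t (\<tau> t) else 1)" for t
  have eps: "\<epsilon> t * \<epsilon> t = 1" for t
    using tau F3_sq unfolding \<epsilon>_def by auto
  have inj: "t = s" if t: "t \<in> T1" and s: "s \<in> T1" and e: "\<tau> t = \<tau> s" for t s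
  proof (rule ccontr)
    assume ne: "t \<noteq> s"
    have "(\<Sum>k\<in>T2. u' t k * u' s k) = u' t (\<tau> t) * u' s (\<tau> t)"
      by (rule sum3_delta[OF fin2]) (use tau[OF t] in auto)
    moreover have "u' t (\<tau> t) * u' s (\<tau> t) \<noteq> 0"
      using tau[OF t] tau[OF s] e F3_mult_nz by metis
    ultimately show False using gram[OF t s] ne by simp
  qed
  have bij: "bij_betw \<tau> T1 T2"
  proof -
    have ij: "inj_on \<tau> T1" using inj unfolding inj_on_def by blast
    have sub: "\<tau> ` T1 \<subseteq> T2" using tau by auto
    have "card (\<tau> ` T1) = card T2" using card_image[OF ij] T1 T2 by simp
    then have "\<tau> ` T1 = T2" using card_subset_eq[OF fin2 sub] by simp
    then show ?thesis using ij unfolding bij_betw_def by simp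
  qed
  have final: "\<exists>c'\<in>C. (\<forall>j\<in>-T1. c' (\<rho> j) = \<delta> j * c j) \<and> (\<forall>t\<in>T1. c' (\<tau> t) = \<epsilon> t * c t)"
    if c: "c \<in> C" for c
  proof -
    define c0 where "c0 = (\<lambda>i. c i - (\<Sum>t\<in>T1. c t * ct t i))"
    have c0C: "c0 \<in> C" unfolding c0_def
      by (rule Cdiff[OF c Csum]) (use fin1 ct in auto)
    have c0z: "\<forall>s\<in>T1. c0 s = 0"
    proof
      fix s assume s: "s \<in> T1"
      have "(\<Sum>t\<in>T1. c t * ct t s) = c s * ct s s"
        by (rule sum3_delta[OF fin1 s]) (use ct s in auto)
      then show "c0 s = 0" using ct[OF s] unfolding c0_def by simp
    qed
    obtain c0' where c0': "c0' \<in> C" "\<forall>t\<in>T2. c0' t = 0" "\<forall>j\<in>-T1. c0' (\<rho> j) = \<delta> j * c0 j"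
      using H12[OF c0C c0z] by blast
    define c' where "c' = (\<lambda>i. c0' i + (\<Sum>t\<in>T1. c t * cp t i))"
    have c'C: "c' \<in> C" unfolding c'_def
      by (rule Cadd[OF c0'(1) Csum]) (use fin1 cpC in auto)
    have P1: "c' (\<rho> j) = \<delta> j * c j" if j: "j \<in> -T1" for j
    proof -
      have cpj: "cp t (\<rho> j) = \<delta> j * ct t j" for t
        using rr2[OF j] by (simp add: cp_def W_def)
      have "c' (\<rho> j) = \<delta> j * c0 j + (\<Sum>t\<in>T1. c t * (\<delta> j * ct t j))"
        unfolding c'_def using c0'(3) j cpj by simp
      also have "\<dots> = \<delta> j * c j"
        unfolding c0_def by (simp add: algebra_simps sum_distrib_left)
      finally show ?thesis .
    qed
    have P2: "c' (\<tau> t) = \<epsilon> t * c t" if t: "t \<in> T1" for t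
    proof -
      have tt: "\<tau> t \<in> T2" using tau[OF t] by blast
      have "c' (\<tau> t) = (\<Sum>s\<in>T1. c s * u' s (\<tau> t))"
        unfolding c'_def using c0'(2) tt by (simp add: cp_def)
      also have "\<dots> = c t * u' t (\<tau> t)"
      proof (rule sum3_delta[OF fin1 t])
        fix s assume s: "s \<in> T1" "s \<noteq> t"
        then have "\<tau> t \<noteq> \<tau> s" using inj t by metis
        then have "u' s (\<tau> t) = 0" using tau[OF s(1)] tt by blast
        then show "c s * u' s (\<tau> t) = 0" by simp
      qed
      finally show ?thesis unfolding \<epsilon>_def using t by (simp add: mult.commute)
    qed
    show ?thesis using c'C P1 P2 by blast
  qed
  show ?thesis using bij eps final by blast
qed

end

definition R6 :: "(int \<times> int) set" where
  "R6 = {(1,0),(-1,0),(0,1),(0,-1),(1,1),(-1,-1)}"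

locale NL =
  fixes N :: "(real^24) set" and a b :: "12 \<Rightarrow> real^24"
  assumes dual: "\<And>x. (\<forall>y\<in>N. x \<bullet> y \<in> \<int>) \<longleftrightarrow> x \<in> N"
    and even: "\<And>x. x \<in> N \<Longrightarrow> \<exists>k::int. x \<bullet> x = 2 * of_int k"
    and aa: "\<And>i. a i \<bullet> a i = 2" and bb: "\<And>i. b i \<bullet> b i = 2" and ab: "\<And>i. a i \<bullet> b i = -1"
    and orth: "\<And>i j. i \<noteq> j \<Longrightarrow> a i \<bullet> a j = 0 \<and> a i \<bullet> b j = 0 \<and> b i \<bullet> b j = 0"
    and roots: "lattice_roots N = (\<Union>i. {a i, - a i, b i, - b i, a i + b i, - (a i + b i)})"
begin

lemma ia: "a i \<bullet> a j = (if i = j then 2 else 0)" using aa orth by auto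
lemma ib: "a i \<bullet> b j = (if i = j then -1 else 0)" using ab orth by auto
lemma ba: "b i \<bullet> a j = (if i = j then -1 else 0)" using ab orth by (auto simp: inner_commute)
lemma bb': "b i \<bullet> b j = (if i = j then 2 else 0)" using bb orth by auto
lemmas abinner = ia ib ba bb'

lemma Nint: "x \<in> N \<Longrightarrow> y \<in> N \<Longrightarrow> x \<bullet> y \<in> \<int>"
  using dual by blast

lemma Nadd: "x \<in> N \<Longrightarrow> y \<in> N \<Longrightarrow> x + y \<in> N"
  using dual[of "x+y"] dual[of x] dual[of y] by (auto simp: inner_add_left)

lemma Nsmul: "x \<in> N \<Longrightarrow> of_int k *\<^sub>R x \<in> N"
proof -
  assume x: "x \<in> N"
  have "\<forall>y\<in>N. (of_int k *\<^sub>R x) \<bullet> y \<in> \<int>"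
    using dual[of x] x by (auto simp: inner_scaleR_left)
  then show ?thesis using dual by blast
qed

lemma Nzero: "0 \<in> N" using dual[of 0] by simp

lemma Nneg: "x \<in> N \<Longrightarrow> - x \<in> N" using Nsmul[of x "-1"] by simp

lemma Ndiff: "x \<in> N \<Longrightarrow> y \<in> N \<Longrightarrow> x - y \<in> N" using Nadd[of x "-y"] Nneg by simp

lemma Nsum: "finite F \<Longrightarrow> (\<And>t. t \<in> F \<Longrightarrow> f t \<in> N) \<Longrightarrow> (\<Sum>t\<in>F. f t) \<in> N"
  by (induction F rule: finite_induct) (auto intro: Nadd Nzero)

lemma rootsN: "lattice_roots N \<subseteq> N" unfolding lattice_roots_def by auto

lemma aN: "a i \<in> N" using roots rootsN by blast
lemma bN: "b i \<in> N" using roots rootsN by blast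

definition rt :: "12 \<Rightarrow> int \<Rightarrow> int \<Rightarrow> real^24" where
  "rt i u w = of_int u *\<^sub>R a i + of_int w *\<^sub>R b i"

lemma rt_inner: "rt i u w \<bullet> rt j u' w' = (if i = j then of_int (2*u*u' - u*w' - w*u' + 2*w*w') else 0)"
  unfolding rt_def by (simp add: inner_add_left inner_add_right abinner algebra_simps)

lemma rt_a: "rt i u w \<bullet> a j = (if i = j then of_int (2*u - w) else 0)"
  unfolding rt_def by (simp add: inner_add_left abinner algebra_simps)

lemma rt_b: "rt i u w \<bullet> b j = (if i = j then of_int (2*w - u) else 0)"
  unfolding rt_def by (simp add: inner_add_left abinner algebra_simps)

lemma root_rt: "x \<in> lattice_roots N \<Longrightarrow> \<exists>i u w. (u,w) \<in> R6 \<and> x = rt i u w"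
proof -
  assume "x \<in> lattice_roots N"
  then obtain i where x: "x \<in> {a i, - a i, b i, - b i, a i + b i, - (a i + b i)}" using roots by auto
  have "\<exists>u w. (u,w) \<in> R6 \<and> x = rt i u w"
  proof -
    have "x = a i \<or> x = - a i \<or> x = b i \<or> x = - b i \<or> x = a i + b i \<or> x = - (a i + b i)" using x by blast
    then show ?thesis
    proof (elim disjE)
      assume "x = a i" then show ?thesis by (intro exI[of _ 1] exI[of _ 0]) (simp add: R6_def rt_def)
    next
      assume "x = - a i" then show ?thesis by (intro exI[of _ "-1"] exI[of _ 0]) (simp add: R6_def rt_def)
    next
      assume "x = b i" then show ?thesis by (intro exI[of _ 0] exI[of _ 1]) (simp add: R6_def rt_def)
    next
      assume "x = - b i" then show ?thesis by (intro exI[of _ 0] exI[of _ "-1"]) (simp add: R6_def rt_def)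
    next
      assume "x = a i + b i" then show ?thesis by (intro exI[of _ 1] exI[of _ 1]) (simp add: R6_def rt_def)
    next
      assume "x = - (a i + b i)" then show ?thesis by (intro exI[of _ "-1"] exI[of _ "-1"]) (simp add: R6_def rt_def)
    qed
  qed
  then show ?thesis by blast
qed

lemma rt_N: "rt i u w \<in> N" unfolding rt_def using Nadd Nsmul aN bN by blast

lemma span_ab: "(\<And>i. z \<bullet> a i = 0 \<and> z \<bullet> b i = 0) \<Longrightarrow> z = 0"
proof -
  assume z: "\<And>i. z \<bullet> a i = 0 \<and> z \<bullet> b i = 0"
  define B where "B = range a \<union> range b"
  have ia_inj: "inj a" unfolding inj_on_def using ia by (metis zero_neq_numeral)
  have ib_inj: "inj b" unfolding inj_on_def using bb' by (metis zero_neq_numeral)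
  have disj: "range a \<inter> range b = {}"
  proof (rule ccontr)
    assume "range a \<inter> range b \<noteq> {}"
    then obtain i j where "a i = b j" by auto
    then have "a i \<bullet> a i = b j \<bullet> a i" by simp
    then show False using aa ba by (auto split: if_splits)
  qed
  have cardB: "card B = 24"
  proof -
    have "card B = card (range a) + card (range b)" unfolding B_def
      by (rule card_Un_disjoint) (use disj in auto)
    also have "\<dots> = 24" using card_image[OF ia_inj] card_image[OF ib_inj] by simp
    finally show ?thesis .
  qed
  have indep: "independent B"
  proof (rule independent_if_scalars_zero)
    show "finite B" unfolding B_def by auto
    fix f x assume s: "(\<Sum>x\<in>B. f x *\<^sub>R x) = 0" and x: "x \<in> B"
    have "(\<Sum>x\<in>B. f x *\<^sub>R x) = (\<Sum>x\<in>range a. f x *\<^sub>R x) + (\<Sum>x\<in>range b. f x *\<^sub>R x)"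
      unfolding B_def by (rule sum.union_disjoint) (use disj in auto)
    also have "\<dots> = (\<Sum>i\<in>UNIV. f (a i) *\<^sub>R a i) + (\<Sum>i\<in>UNIV. f (b i) *\<^sub>R b i)"
      by (simp add: sum.reindex[OF ia_inj] sum.reindex[OF ib_inj])
    finally have s2: "(\<Sum>i\<in>UNIV. f (a i) *\<^sub>R a i) + (\<Sum>i\<in>UNIV. f (b i) *\<^sub>R b i) = 0" using s by simp
    have "f (a j) = 0 \<and> f (b j) = 0" for j
    proof -
      have e1: "((\<Sum>i\<in>UNIV. f (a i) *\<^sub>R a i) + (\<Sum>i\<in>UNIV. f (b i) *\<^sub>R b i)) \<bullet> a j = 2 * f (a j) - f (b j)"
        by (simp add: inner_add_left inner_sum_left abinner if_distrib cong: if_cong)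
      have e2: "((\<Sum>i\<in>UNIV. f (a i) *\<^sub>R a i) + (\<Sum>i\<in>UNIV. f (b i) *\<^sub>R b i)) \<bullet> b j = 2 * f (b j) - f (a j)"
        by (simp add: inner_add_left inner_sum_left abinner if_distrib cong: if_cong)
      from e1 e2 s2 show ?thesis by simp
    qed
    then show "f x = 0" using x unfolding B_def by auto
  qed
  have "UNIV \<subseteq> span B"
    by (rule card_ge_dim_independent) (use indep cardB in \<open>auto simp: dim_UNIV\<close>)
  then have "orthogonal z z"
    by (intro orthogonal_to_span[of z B z]) (auto simp: orthogonal_def B_def z)
  then show "z = 0" by (simp add: orthogonal_def)
qed

end

lemma int_pair:
  fixes u1 w1 u2 w2 :: int
  assumes "(u1,w1) \<in> R6" "(u2,w2) \<in> R6" "2*u1*u2 - u1*w2 - w1*u2 + 2*w1*w2 = -1"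
  shows "(u1*w2 - w1*u2) * (u1*w2 - w1*u2) = 1 \<and> (u1 - u2 + w1 - w2) mod 3 = 0 \<and> (u1 - u2) mod 3 \<noteq> 0"
  using assms unfolding R6_def by auto

context NL begin

definition spair :: "12 \<Rightarrow> real^24 \<Rightarrow> real^24 \<Rightarrow> bool" where
  "spair i x y \<longleftrightarrow> (\<exists>u1 w1 u2 w2. (u1,w1) \<in> R6 \<and> (u2,w2) \<in> R6 \<and>
     2*u1*u2 - u1*w2 - w1*u2 + 2*w1*w2 = -1 \<and> x = rt i u1 w1 \<and> y = rt i u2 w2)"

lemma spE:
  assumes "spair i x y"
  obtains u1 w1 u2 w2 where "(u1,w1) \<in> R6" "(u2,w2) \<in> R6"
     "2*u1*u2 - u1*w2 - w1*u2 + 2*w1*w2 = -1" "x = rt i u1 w1" "y = rt i u2 w2"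
     "(u1*w2 - w1*u2) * (u1*w2 - w1*u2) = 1" "(u1 - u2 + w1 - w2) mod 3 = 0" "(u1 - u2) mod 3 \<noteq> 0"
  using assms int_pair unfolding spair_def by metis

lemma R6_norm: "(u,w) \<in> R6 \<Longrightarrow> 2*u*u - u*w - w*u + 2*w*w = 2"
  unfolding R6_def by auto

lemma sp_inner: "spair i x y \<Longrightarrow> x \<bullet> x = 2 \<and> y \<bullet> y = 2 \<and> x \<bullet> y = -1 \<and> y \<bullet> x = -1"
proof (elim spE)
  fix u1 w1 u2 w2 :: int
  assume r1: "(u1,w1) \<in> R6" and r2: "(u2,w2) \<in> R6" and p: "2*u1*u2 - u1*w2 - w1*u2 + 2*w1*w2 = -1"
    and x: "x = rt i u1 w1" and y: "y = rt i u2 w2"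
  have "x \<bullet> x = of_int (2*u1*u1 - u1*w1 - w1*u1 + 2*w1*w1)" unfolding x by (simp only: rt_inner if_P[OF refl])
  also have "\<dots> = 2" using R6_norm[OF r1] by simp
  finally have 1: "x \<bullet> x = 2" .
  have "y \<bullet> y = of_int (2*u2*u2 - u2*w2 - w2*u2 + 2*w2*w2)" unfolding y by (simp only: rt_inner if_P[OF refl])
  also have "\<dots> = 2" using R6_norm[OF r2] by simp
  finally have 2: "y \<bullet> y = 2" .
  have "x \<bullet> y = of_int (2*u1*u2 - u1*w2 - w1*u2 + 2*w1*w2)" unfolding x y by (simp only: rt_inner if_P[OF refl])
  also have "\<dots> = -1" using p by simp
  finally have 3: "x \<bullet> y = -1" .
  show ?thesis using 1 2 3 by (simp add: inner_commute)
qed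

lemma sp_cross: "spair i x y \<Longrightarrow> spair j x' y' \<Longrightarrow> i \<noteq> j \<Longrightarrow>
   x \<bullet> x' = 0 \<and> x \<bullet> y' = 0 \<and> y \<bullet> x' = 0 \<and> y \<bullet> y' = 0"
  by (elim spE) (simp add: rt_inner)

lemma sp_other: "spair i x y \<Longrightarrow> j \<noteq> i \<Longrightarrow> x \<bullet> a j = 0 \<and> x \<bullet> b j = 0 \<and> y \<bullet> a j = 0 \<and> y \<bullet> b j = 0"
  by (elim spE) (simp add: rt_a rt_b)

lemma sp_N: "spair i x y \<Longrightarrow> x \<in> N \<and> y \<in> N"
  by (elim spE) (simp add: rt_N)

lemma lin2: fixes A B :: "'v::real_vector"
  shows "p *\<^sub>R (u1 *\<^sub>R A + w1 *\<^sub>R B) + q *\<^sub>R (u2 *\<^sub>R A + w2 *\<^sub>R B) = (p*u1 + q*u2) *\<^sub>R A + (p*w1 + q*w2) *\<^sub>R B"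
  by (simp add: scaleR_add_right scaleR_add_left add_ac)

lemma sp_ab: "spair i x y \<Longrightarrow> \<exists>p q r s :: int. a i = of_int p *\<^sub>R x + of_int q *\<^sub>R y \<and> b i = of_int r *\<^sub>R x + of_int s *\<^sub>R y"
proof (elim spE)
  fix u1 w1 u2 w2 :: int
  assume x: "x = rt i u1 w1" and y: "y = rt i u2 w2" and D: "(u1*w2 - w1*u2) * (u1*w2 - w1*u2) = 1"
  define D where "D = u1*w2 - w1*u2"
  have "real_of_int (D*w2) *\<^sub>R x + real_of_int (- D*w1) *\<^sub>R y
        = (real_of_int (D*w2) * u1 + real_of_int (- D*w1) * u2) *\<^sub>R a i + (real_of_int (D*w2) * w1 + real_of_int (- D*w1) * w2) *\<^sub>R b i"
    unfolding x y rt_def by (rule lin2)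
  also have "(real_of_int (D*w2) * u1 + real_of_int (- D*w1) * u2) = of_int (D * D)"
    unfolding D_def by (simp add: algebra_simps)
  also have "(real_of_int (D*w2) * w1 + real_of_int (- D*w1) * w2) = 0"
    by (simp add: algebra_simps)
  finally have 1: "a i = real_of_int (D*w2) *\<^sub>R x + real_of_int (- D*w1) *\<^sub>R y" using D unfolding D_def by simp
  have "real_of_int (- D*u2) *\<^sub>R x + real_of_int (D*u1) *\<^sub>R y
        = (real_of_int (- D*u2) * u1 + real_of_int (D*u1) * u2) *\<^sub>R a i + (real_of_int (- D*u2) * w1 + real_of_int (D*u1) * w2) *\<^sub>R b i"
    unfolding x y rt_def by (rule lin2)
  also have "(real_of_int (- D*u2) * u1 + real_of_int (D*u1) * u2) = 0"
    by (simp add: algebra_simps)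
  also have "(real_of_int (- D*u2) * w1 + real_of_int (D*u1) * w2) = of_int (D * D)"
    unfolding D_def by (simp add: algebra_simps)
  finally have 2: "b i = real_of_int (- D*u2) *\<^sub>R x + real_of_int (D*u1) *\<^sub>R y" using D unfolding D_def by simp
  show ?thesis using 1 2 by blast
qed

lemma sp_ab_inner: "spair i x y \<Longrightarrow> \<exists>p q r s :: int. \<forall>z. z \<bullet> a i = of_int p * (z \<bullet> x) + of_int q * (z \<bullet> y) \<and> z \<bullet> b i = of_int r * (z \<bullet> x) + of_int s * (z \<bullet> y)"
proof -
  assume "spair i x y"
  then obtain p q r s :: int where e: "a i = of_int p *\<^sub>R x + of_int q *\<^sub>R y" "b i = of_int r *\<^sub>R x + of_int s *\<^sub>R y"
    using sp_ab by blast
  show ?thesis by (intro exI[of _ p] exI[of _ q] exI[of _ r] exI[of _ s]) (simp add: e inner_add_right)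
qed

lemma sp_perp: "spair i x y \<Longrightarrow> z \<bullet> x = 0 \<Longrightarrow> z \<bullet> y = 0 \<Longrightarrow> z \<bullet> a i = 0 \<and> z \<bullet> b i = 0"
  using sp_ab_inner by fastforce

lemma sp_ab_pair: "spair i (a i) (b i)"
  unfolding spair_def R6_def rt_def by (intro exI[of _ 1] exI[of _ 0] exI[of _ 0] exI[of _ 1]) simp

lemma sp_neg_ab_pair: "spair i (- a i) (- b i)"
  unfolding spair_def R6_def rt_def by (intro exI[of _ "-1"] exI[of _ 0] exI[of _ 0] exI[of _ "-1"]) simp

definition qd :: "real^24 \<Rightarrow> bool" where
  "qd v \<longleftrightarrow> (\<forall>i. v \<bullet> a i \<in> \<int> \<and> v \<bullet> b i \<in> \<int>)"

definition cl :: "12 \<Rightarrow> real^24 \<Rightarrow> 3" where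
  "cl i v = of_int \<lfloor>v \<bullet> a i - v \<bullet> b i\<rfloor>"

definition dv :: "12 \<Rightarrow> real^24" where
  "dv i = (1/3) *\<^sub>R (2 *\<^sub>R a i + b i)"

lemma dv_a: "dv i \<bullet> a j = (if i = j then 1 else 0)"
  unfolding dv_def by (simp add: inner_add_left abinner)
lemma dv_b: "dv i \<bullet> b j = 0"
  unfolding dv_def by (simp add: inner_add_left abinner)
lemma dv_dv: "dv i \<bullet> dv j = (if i = j then 2/3 else 0)"
  unfolding dv_def by (simp add: inner_add_left inner_add_right abinner)
lemma dv_rt: "dv i \<bullet> rt j u w = (if i = j then of_int u else 0)"
  unfolding rt_def by (simp add: inner_add_right dv_a dv_b)

definition psg :: "12 \<Rightarrow> real^24 \<Rightarrow> real^24 \<Rightarrow> 3" where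
  "psg i x y = of_int \<lfloor>dv i \<bullet> x - dv i \<bullet> y\<rfloor>"

lemma qdN: "v \<in> N \<Longrightarrow> qd v"
  unfolding qd_def using Nint aN bN by blast

lemma qd_rt: "qd v \<Longrightarrow> v \<bullet> rt i u w \<in> \<int>"
  unfolding qd_def rt_def by (simp add: inner_add_right)

lemma sp_qd: "spair i x y \<Longrightarrow> qd v \<Longrightarrow> v \<bullet> x \<in> \<int> \<and> v \<bullet> y \<in> \<int>"
  by (elim spE) (simp add: qd_rt)

lemma of_int3_0: "(of_int k :: 3) = 0 \<longleftrightarrow> (3::int) dvd k"
  by (simp add: of_int_eq_0_iff_char_dvd)

lemma sp_psg: "spair i x y \<Longrightarrow> qd v \<Longrightarrow> of_int \<lfloor>v \<bullet> x - v \<bullet> y\<rfloor> = psg i x y * cl i v"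
proof (elim spE)
  fix u1 w1 u2 w2 :: int
  assume x: "x = rt i u1 w1" and y: "y = rt i u2 w2" and m3: "(u1 - u2 + w1 - w2) mod 3 = 0"
  assume q: "qd v"
  obtain M where M: "v \<bullet> a i = of_int M" using q unfolding qd_def by (metis Ints_cases)
  obtain K where K: "v \<bullet> b i = of_int K" using q unfolding qd_def by (metis Ints_cases)
  have vx: "v \<bullet> x - v \<bullet> y = of_int ((u1-u2)*M + (w1-w2)*K)"
    unfolding x y rt_def by (simp add: inner_add_right M K algebra_simps)
  have ps: "psg i x y = of_int (u1 - u2)"
    unfolding psg_def x y by (simp add: dv_rt)
  have c: "cl i v = of_int (M - K)" unfolding cl_def M K by simp
  obtain k where k: "u1 - u2 + w1 - w2 = 3 * k" using m3 by (metis dvd_def mod_0_imp_dvd)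
  have "(u1-u2)*M + (w1-w2)*K = (u1-u2)*(M-K) + 3*(k*K)"
    using k by (simp add: algebra_simps) (metis add.commute add_diff_cancel_left' diff_add_cancel k mult.commute mult.left_commute distrib_left)
  then have "(of_int ((u1-u2)*M + (w1-w2)*K) :: 3) = of_int (u1-u2) * of_int (M-K) + of_int (3*(k*K))"
    by simp
  also have "(of_int (3*(k*K)) :: 3) = 0" by (subst of_int3_0) simp
  finally have e: "(of_int ((u1-u2)*M + (w1-w2)*K) :: 3) = of_int (u1-u2) * of_int (M-K)" by simp
  have "\<lfloor>v \<bullet> x - v \<bullet> y\<rfloor> = (u1-u2)*M + (w1-w2)*K" by (simp only: vx floor_of_int)
  then show ?thesis using e ps c by simp
qed

lemma sp_psg2: "spair i x y \<Longrightarrow> psg i x y * psg i x y = 1"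
proof (elim spE)
  fix u1 w1 u2 w2 :: int
  assume x: "x = rt i u1 w1" and y: "y = rt i u2 w2" and m3: "(u1 - u2) mod 3 \<noteq> 0"
  have ps: "psg i x y = of_int (u1 - u2)"
    unfolding psg_def x y by (simp add: dv_rt)
  have "(of_int (u1 - u2) :: 3) \<noteq> 0" using m3 by (simp only: of_int3_0 dvd_eq_mod_eq_0) simp
  then show ?thesis using ps F3_sq by simp
qed

lemma psg_ab: "psg i (a i) (b i) = 1"
  unfolding psg_def by (simp add: dv_a dv_b)

lemma psg_nab: "psg i (- a i) (- b i) = -1"
proof -
  have f: "\<lfloor>(-1::real)\<rfloor> = -1" by (metis floor_of_int of_int_1 of_int_minus)
  show ?thesis unfolding psg_def by (simp add: dv_a dv_b f)
qed

definition cx :: "real^24 \<Rightarrow> real^24 \<Rightarrow> real^24 \<Rightarrow> real" where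
  "cx v x y = (2 * (v \<bullet> x) + v \<bullet> y) / 3"
definition cy :: "real^24 \<Rightarrow> real^24 \<Rightarrow> real^24 \<Rightarrow> real" where
  "cy v x y = (v \<bullet> x + 2 * (v \<bullet> y)) / 3"

lemma decomp:
  assumes sp: "\<And>i. spair i (X i) (Y i)"
  shows "v = (\<Sum>i\<in>UNIV. cx v (X i) (Y i) *\<^sub>R X i + cy v (X i) (Y i) *\<^sub>R Y i)"
proof -
  define z where "z = v - (\<Sum>i\<in>UNIV. cx v (X i) (Y i) *\<^sub>R X i + cy v (X i) (Y i) *\<^sub>R Y i)"
  have zXY: "z \<bullet> X j = 0 \<and> z \<bullet> Y j = 0" for j
  proof -
    have s1: "(\<Sum>i\<in>UNIV. cx v (X i) (Y i) *\<^sub>R X i + cy v (X i) (Y i) *\<^sub>R Y i) \<bullet> X j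
       = cx v (X j) (Y j) * 2 + cy v (X j) (Y j) * (-1)"
    proof -
      have "(\<Sum>i\<in>UNIV. cx v (X i) (Y i) *\<^sub>R X i + cy v (X i) (Y i) *\<^sub>R Y i) \<bullet> X j
         = (\<Sum>i\<in>UNIV. cx v (X i) (Y i) * (X i \<bullet> X j) + cy v (X i) (Y i) * (Y i \<bullet> X j))"
        by (simp add: inner_sum_left inner_add_left)
      also have "\<dots> = cx v (X j) (Y j) * (X j \<bullet> X j) + cy v (X j) (Y j) * (Y j \<bullet> X j)"
        by (rule sum3_delta) (use sp_cross[OF sp sp] in auto)
      finally show ?thesis using sp_inner[OF sp[of j]] by simp
    qed
    have s2: "(\<Sum>i\<in>UNIV. cx v (X i) (Y i) *\<^sub>R X i + cy v (X i) (Y i) *\<^sub>R Y i) \<bullet> Y j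
       = cx v (X j) (Y j) * (-1) + cy v (X j) (Y j) * 2"
    proof -
      have "(\<Sum>i\<in>UNIV. cx v (X i) (Y i) *\<^sub>R X i + cy v (X i) (Y i) *\<^sub>R Y i) \<bullet> Y j
         = (\<Sum>i\<in>UNIV. cx v (X i) (Y i) * (X i \<bullet> Y j) + cy v (X i) (Y i) * (Y i \<bullet> Y j))"
        by (simp add: inner_sum_left inner_add_left)
      also have "\<dots> = cx v (X j) (Y j) * (X j \<bullet> Y j) + cy v (X j) (Y j) * (Y j \<bullet> Y j)"
        by (rule sum3_delta) (use sp_cross[OF sp sp] in auto)
      finally show ?thesis using sp_inner[OF sp[of j]] by simp
    qed
    have "z \<bullet> X j = v \<bullet> X j - (cx v (X j) (Y j) * 2 + cy v (X j) (Y j) * (-1))"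
      unfolding z_def inner_diff_left s1 ..
    also have "\<dots> = 0" unfolding cx_def cy_def by (simp add: field_simps inner_commute)
    finally have 1: "z \<bullet> X j = 0" .
    have "z \<bullet> Y j = v \<bullet> Y j - (cx v (X j) (Y j) * (-1) + cy v (X j) (Y j) * 2)"
      unfolding z_def inner_diff_left s2 ..
    also have "\<dots> = 0" unfolding cx_def cy_def by (simp add: field_simps inner_commute)
    finally have 2: "z \<bullet> Y j = 0" .
    show ?thesis using 1 2 by simp
  qed
  have "z = 0"
  proof (rule span_ab)
    fix i show "z \<bullet> a i = 0 \<and> z \<bullet> b i = 0"
      using sp_perp[OF sp[of i]] zXY by blast
  qed
  then show ?thesis unfolding z_def by simp
qed

end

context NL begin

lemma qd_add: "qd v \<Longrightarrow> qd w \<Longrightarrow> qd (v + w)"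
  unfolding qd_def by (simp add: inner_add_left)
lemma qd_diff: "qd v \<Longrightarrow> qd w \<Longrightarrow> qd (v - w)"
  unfolding qd_def by (simp add: inner_diff_left)

lemma qd_int: "qd v \<Longrightarrow> v \<bullet> a i = of_int \<lfloor>v \<bullet> a i\<rfloor> \<and> v \<bullet> b i = of_int \<lfloor>v \<bullet> b i\<rfloor>"
  unfolding qd_def by (metis Ints_cases floor_of_int)

lemma clI: "v \<bullet> a i = of_int M \<Longrightarrow> v \<bullet> b i = of_int K \<Longrightarrow> cl i v = of_int (M - K)"
  unfolding cl_def by (metis floor_of_int of_int_diff)

lemma cl_qd: "qd v \<Longrightarrow> cl i v = of_int (\<lfloor>v \<bullet> a i\<rfloor> - \<lfloor>v \<bullet> b i\<rfloor>)"
  using qd_int clI by blast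

lemma cl_add: "qd v \<Longrightarrow> qd w \<Longrightarrow> cl i (v + w) = cl i v + cl i w"
proof -
  assume v: "qd v" and w: "qd w"
  have "cl i (v + w) = of_int ((\<lfloor>v \<bullet> a i\<rfloor> + \<lfloor>w \<bullet> a i\<rfloor>) - (\<lfloor>v \<bullet> b i\<rfloor> + \<lfloor>w \<bullet> b i\<rfloor>))"
    by (rule clI) (use qd_int[OF v] qd_int[OF w] in \<open>auto simp: inner_add_left\<close>)
  moreover have "cl i v = of_int (\<lfloor>v \<bullet> a i\<rfloor> - \<lfloor>v \<bullet> b i\<rfloor>)" using cl_qd[OF v] .
  moreover have "cl i w = of_int (\<lfloor>w \<bullet> a i\<rfloor> - \<lfloor>w \<bullet> b i\<rfloor>)" using cl_qd[OF w] .
  ultimately show ?thesis by (simp only: of_int_add of_int_diff) (simp add: algebra_simps)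
qed

lemma cl_diff: "qd v \<Longrightarrow> qd w \<Longrightarrow> cl i (v - w) = cl i v - cl i w"
  using cl_add[of "v - w" w] qd_diff by (simp add: eq_diff_eq)

lemma memN0: "qd v \<Longrightarrow> (\<And>i. cl i v = 0) \<Longrightarrow> v \<in> N"
proof -
  assume q: "qd v" and c: "\<And>i. cl i v = 0"
  have v: "v = (\<Sum>i\<in>UNIV. cx v (a i) (b i) *\<^sub>R a i + cy v (a i) (b i) *\<^sub>R b i)"
    by (rule decomp[OF sp_ab_pair])
  have "cx v (a i) (b i) *\<^sub>R a i + cy v (a i) (b i) *\<^sub>R b i \<in> N" for i
  proof -
    define M where "M = \<lfloor>v \<bullet> a i\<rfloor>"
    define K where "K = \<lfloor>v \<bullet> b i\<rfloor>"
    have MK: "v \<bullet> a i = of_int M" "v \<bullet> b i = of_int K" using qd_int[OF q] unfolding M_def K_def by auto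
    have "(of_int (M - K) :: 3) = 0" using c[of i] clI[OF MK] by simp
    then obtain t where t: "M - K = 3 * t" using of_int3_0 by (metis dvd_def)
    have "cx v (a i) (b i) = of_int (M - t)" unfolding cx_def MK using t by (simp add: field_simps) 
    moreover have "cy v (a i) (b i) = of_int (K + t)" unfolding cy_def MK using t by (simp add: field_simps)
    ultimately show ?thesis using Nadd[OF Nsmul[OF aN, of "M-t" i] Nsmul[OF bN, of "K+t" i]] by simp
  qed
  then have "(\<Sum>i\<in>UNIV. cx v (a i) (b i) *\<^sub>R a i + cy v (a i) (b i) *\<^sub>R b i) \<in> N"
    by (intro Nsum) auto
  then show ?thesis using v by simp
qed

definition cw :: "real^24 \<Rightarrow> 12 \<Rightarrow> 3" where "cw v = (\<lambda>i. cl i v)"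
definition CC :: "(12 \<Rightarrow> 3) set" where "CC = cw ` N"

lemma memN: "qd w \<Longrightarrow> cw w \<in> CC \<Longrightarrow> w \<in> N"
proof -
  assume q: "qd w" and c: "cw w \<in> CC"
  then obtain v where v: "v \<in> N" "cw v = cw w" unfolding CC_def by auto
  have "w - v \<in> N"
    by (rule memN0) (use q qdN[OF v(1)] v(2) in \<open>auto simp: qd_diff cl_diff cw_def fun_eq_iff\<close>)
  then have "(w - v) + v \<in> N" using Nadd v(1) by blast
  then show ?thesis by simp
qed

lemma inner_decomp: "qd v \<Longrightarrow> v \<bullet> w = (\<Sum>i\<in>UNIV. cx v (a i) (b i) * (a i \<bullet> w) + cy v (a i) (b i) * (b i \<bullet> w))"
proof -
  have "v \<bullet> w = (\<Sum>i\<in>UNIV. cx v (a i) (b i) *\<^sub>R a i + cy v (a i) (b i) *\<^sub>R b i) \<bullet> w"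
    using decomp[OF sp_ab_pair, of v] by simp
  also have "\<dots> = (\<Sum>i\<in>UNIV. cx v (a i) (b i) * (a i \<bullet> w) + cy v (a i) (b i) * (b i \<bullet> w))"
    by (simp add: inner_sum_left inner_add_left)
  finally show ?thesis .
qed

lemma lift3: "\<exists>k::int. (of_int k :: 3) = z \<and> k * k = (if z = 0 then 0 else 1)"
proof -
  have "z = 0 \<or> z = 1 \<or> z = -1" by (rule F3_cases)
  then show ?thesis by (elim disjE) (auto intro: exI[of _ 0] exI[of _ 1] exI[of _ "-1"])
qed


lemma cl_zero: "cl i 0 = 0" unfolding cl_def by simp

lemma CC_0: "(\<lambda>i. 0) \<in> CC"
proof -
  have "cw 0 = (\<lambda>i. 0)" unfolding cw_def by (simp add: cl_zero)
  then show ?thesis unfolding CC_def using Nzero by force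
qed

lemma CC_add: "c \<in> CC \<Longrightarrow> d \<in> CC \<Longrightarrow> (\<lambda>i. c i + d i) \<in> CC"
proof -
  assume "c \<in> CC" "d \<in> CC"
  then obtain v w where v: "v \<in> N" "c = cw v" and w: "w \<in> N" "d = cw w" unfolding CC_def by auto
  have "cw (v + w) = (\<lambda>i. c i + d i)" unfolding v w cw_def using cl_add qdN v w by auto
  then show ?thesis unfolding CC_def using Nadd[OF v(1) w(1)] by force
qed

lemma cx_ab: "qd v \<Longrightarrow> cx v (a i) (b i) = (2 * of_int \<lfloor>v \<bullet> a i\<rfloor> + of_int \<lfloor>v \<bullet> b i\<rfloor>) / 3"
  unfolding cx_def using qd_int by metis
lemma cy_ab: "qd v \<Longrightarrow> cy v (a i) (b i) = (of_int \<lfloor>v \<bullet> a i\<rfloor> + 2 * of_int \<lfloor>v \<bullet> b i\<rfloor>) / 3"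
  unfolding cy_def using qd_int by metis

lemma CC_orth: "c \<in> CC \<Longrightarrow> d \<in> CC \<Longrightarrow> (\<Sum>i\<in>UNIV. c i * d i) = 0"
proof -
  assume "c \<in> CC" "d \<in> CC"
  then obtain v w where v: "v \<in> N" "c = cw v" and w: "w \<in> N" "d = cw w" unfolding CC_def by auto
  have qv: "qd v" and qw: "qd w" using qdN v w by auto
  define Mv where "Mv i = \<lfloor>v \<bullet> a i\<rfloor>" for i
  define Kv where "Kv i = \<lfloor>v \<bullet> b i\<rfloor>" for i
  define Mw where "Mw i = \<lfloor>w \<bullet> a i\<rfloor>" for i
  define Kw where "Kw i = \<lfloor>w \<bullet> b i\<rfloor>" for i
  have wa: "a i \<bullet> w = of_int (Mw i)" "b i \<bullet> w = of_int (Kw i)" for i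
    using qd_int[OF qw] unfolding Mw_def Kw_def by (auto simp: inner_commute)
  obtain L where L: "v \<bullet> w = of_int L" using Nint[OF v(1) w(1)] by (metis Ints_cases)
  define S where "S = (\<Sum>i\<in>UNIV. 2*Mv i*Mw i + Kv i*Mw i + Mv i*Kw i + 2*Kv i*Kw i)"
  have "v \<bullet> w = (\<Sum>i\<in>UNIV. ((2 * of_int (Mv i) + of_int (Kv i)) / 3) * of_int (Mw i) + ((of_int (Mv i) + 2 * of_int (Kv i)) / 3) * of_int (Kw i))"
  proof -
    have "v \<bullet> w = (\<Sum>i\<in>UNIV. cx v (a i) (b i) * (a i \<bullet> w) + cy v (a i) (b i) * (b i \<bullet> w))"
      by (rule inner_decomp[OF qv])
    also have "\<dots> = (\<Sum>i\<in>UNIV. ((2 * of_int (Mv i) + of_int (Kv i)) / 3) * of_int (Mw i) + ((of_int (Mv i) + 2 * of_int (Kv i)) / 3) * of_int (Kw i))"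
      by (rule sum.cong) (simp_all only: cx_ab[OF qv] cy_ab[OF qv] wa Mv_def Kv_def)
    finally show ?thesis .
  qed
  also have "\<dots> = (\<Sum>i\<in>UNIV. of_int (2*Mv i*Mw i + Kv i*Mw i + Mv i*Kw i + 2*Kv i*Kw i) / 3)"
    by (rule sum.cong) (simp_all add: field_simps)
  also have "\<dots> = of_int S / 3"
    unfolding S_def by (simp only: sum_divide_distrib[symmetric] of_int_sum)
  finally have S3: "S = 3 * L" using L by simp
  define T where "T = (\<Sum>i\<in>UNIV. (Mv i - Kv i) * (Mw i - Kw i))"
  define U where "U = (\<Sum>i\<in>UNIV. Mv i * Kw i + Kv i * Mw i)"
  have "2 * T = (\<Sum>i\<in>UNIV. 2 * ((Mv i - Kv i) * (Mw i - Kw i)))"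
    unfolding T_def by (simp only: sum_distrib_left)
  also have "\<dots> = (\<Sum>i\<in>UNIV. (2*Mv i*Mw i + Kv i*Mw i + Mv i*Kw i + 2*Kv i*Kw i) - 3 * (Mv i * Kw i + Kv i * Mw i))"
    by (rule sum.cong) (simp_all add: algebra_simps)
  also have "\<dots> = S - 3 * U"
    unfolding S_def U_def by (simp only: sum_subtractf sum_distrib_left)
  finally have "2 * T = S - 3 * U" .
  then have "T = 3 * (T - L + U)" using S3 by simp
  then have T0: "(of_int T :: 3) = 0" using of_int3_0 by (metis dvd_triv_left)
  have "(\<Sum>i\<in>UNIV. c i * d i) = (\<Sum>i\<in>UNIV. of_int (Mv i - Kv i) * of_int (Mw i - Kw i))"
    unfolding v w cw_def using cl_qd[OF qv] cl_qd[OF qw] Mv_def Kv_def Mw_def Kw_def by simp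
  also have "\<dots> = of_int T" unfolding T_def by (simp only: of_int_sum of_int_mult)
  finally show ?thesis using T0 by simp
qed

lemma CC_dual: "(\<And>c. c \<in> CC \<Longrightarrow> (\<Sum>i\<in>UNIV. u i * c i) = 0) \<Longrightarrow> u \<in> CC"
proof -
  assume H: "\<And>c. c \<in> CC \<Longrightarrow> (\<Sum>i\<in>UNIV. u i * c i) = 0"
  have "\<forall>i. \<exists>k::int. (of_int k :: 3) = u i" using lift3 by blast
  then obtain lf where lf: "\<And>i. (of_int (lf i) :: 3) = u i" by metis
  define xu where "xu = (\<Sum>i\<in>UNIV. of_int (lf i) *\<^sub>R dv i)"
  have xa: "xu \<bullet> a j = of_int (lf j)" for j
    unfolding xu_def by (simp add: inner_sum_left dv_a if_distrib cong: if_cong)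
  have xb: "xu \<bullet> b j = 0" for j
    unfolding xu_def by (simp add: inner_sum_left dv_b)
  have qx: "qd xu" unfolding qd_def xa xb by simp
  have cwx: "cw xu = u"
  proof -
    have "cl j xu = u j" for j using clI[of xu j "lf j" 0] xa[of j] xb[of j] lf[of j] by simp
    then show ?thesis unfolding cw_def by auto
  qed
  have "xu \<in> N"
  proof (subst dual[symmetric], intro ballI)
    fix y assume y: "y \<in> N"
    have qy: "qd y" using qdN y by blast
    define My where "My i = \<lfloor>y \<bullet> a i\<rfloor>" for i
    define Ky where "Ky i = \<lfloor>y \<bullet> b i\<rfloor>" for i
    have ya: "a i \<bullet> y = of_int (My i)" "b i \<bullet> y = of_int (Ky i)" for i
      unfolding My_def Ky_def by (metis qd_int[OF qy] inner_commute)+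
    have dy: "dv i \<bullet> y = (2 * of_int (My i) + of_int (Ky i)) / 3" for i
      unfolding dv_def by (simp add: inner_add_left ya)
    define S where "S = (\<Sum>i\<in>UNIV. lf i * (2 * My i + Ky i))"
    have "xu \<bullet> y = (\<Sum>i\<in>UNIV. of_int (lf i) * ((2 * of_int (My i) + of_int (Ky i)) / 3))"
      unfolding xu_def by (simp add: inner_sum_left dy)
    also have "\<dots> = of_int S / 3"
      unfolding S_def by (simp add: sum_divide_distrib[symmetric] field_simps)
    finally have xy: "xu \<bullet> y = of_int S / 3" .
    have "(of_int S :: 3) = (\<Sum>i\<in>UNIV. u i * (of_int (3 * My i) - of_int (My i - Ky i)))"
      unfolding S_def by (simp add: lf[symmetric] algebra_simps)
    also have "\<dots> = - (\<Sum>i\<in>UNIV. u i * cl i y)"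
    proof -
      have "(of_int (3 * My i) :: 3) = 0" for i by (subst of_int3_0) simp
      moreover have "cl i y = of_int (My i - Ky i)" for i using cl_qd[OF qy] unfolding My_def Ky_def by simp
      ultimately have "u i * (of_int (3 * My i) - of_int (My i - Ky i)) = - (u i * cl i y)" for i
        by (simp only:) (simp add: algebra_simps)
      then show ?thesis by (simp add: sum_negf[symmetric])
    qed
    also have "(\<Sum>i\<in>UNIV. u i * cl i y) = 0"
      using H[of "cw y"] y unfolding CC_def cw_def by auto
    finally have "(of_int S :: 3) = 0" by simp
    then obtain t where "S = 3 * t" using of_int3_0 by (metis dvd_def)
    then show "xu \<bullet> y \<in> \<int>" using xy by simp
  qed
  then show "u \<in> CC" unfolding CC_def using cwx by force
qed

lemma cl_rt: "cl j (rt i u w) = 0"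
proof -
  have "cl j (rt i u w) = of_int ((if i = j then 2*u - w else 0) - (if i = j then 2*w - u else 0))"
    by (rule clI) (simp_all add: rt_a rt_b)
  also have "\<dots> = 0" by (subst of_int3_0) auto
  finally show ?thesis .
qed

lemma CC_min: "c \<in> CC \<Longrightarrow> card {i. c i \<noteq> 0} \<le> 3 \<Longrightarrow> c = (\<lambda>i. 0)"
proof -
  assume c: "c \<in> CC" and card3: "card {i. c i \<noteq> 0} \<le> 3"
  have "\<forall>i. \<exists>k::int. (of_int k :: 3) = c i \<and> k * k = (if c i = 0 then 0 else 1)" using lift3 by blast
  then obtain lf where lf: "\<And>i. (of_int (lf i) :: 3) = c i \<and> lf i * lf i = (if c i = 0 then 0 else 1)"
    by metis
  define w where "w = (\<Sum>i\<in>UNIV. of_int (lf i) *\<^sub>R dv i)"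
  have wa: "w \<bullet> a j = of_int (lf j)" for j
    unfolding w_def by (simp add: inner_sum_left dv_a if_distrib cong: if_cong)
  have wb: "w \<bullet> b j = 0" for j
    unfolding w_def by (simp add: inner_sum_left dv_b)
  have qw: "qd w" unfolding qd_def wa wb by simp
  have cww: "cw w = c"
  proof -
    have "cl j w = c j" for j using clI[of w j "lf j" 0] wa[of j] wb[of j] lf[of j] by simp
    then show ?thesis unfolding cw_def by auto
  qed
  have wN: "w \<in> N" using memN[OF qw] cww c by simp
  define A where "A = {i. c i \<noteq> 0}"
  have "w \<bullet> w = (\<Sum>i\<in>UNIV. of_int (lf i) * (dv i \<bullet> w))"
    unfolding w_def by (simp add: inner_sum_left)
  also have "\<dots> = (\<Sum>i\<in>UNIV. of_int (lf i) * (of_int (lf i) * (2/3)))"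
  proof (rule sum.cong)
    fix i
    have "dv i \<bullet> w = (\<Sum>j\<in>UNIV. of_int (lf j) * (dv i \<bullet> dv j))"
      unfolding w_def by (simp add: inner_sum_right)
    also have "\<dots> = of_int (lf i) * (2/3)"
      by (simp add: dv_dv if_distrib cong: if_cong)
    finally show "of_int (lf i) * (dv i \<bullet> w) = of_int (lf i) * (of_int (lf i) * (2/3))" by simp
  qed simp
  also have "\<dots> = (\<Sum>i\<in>UNIV. (if c i = 0 then 0 else 2/3))"
  proof (rule sum.cong)
    fix i
    have "real_of_int (lf i) * real_of_int (lf i) = (if c i = 0 then 0 else 1)"
      using lf[of i] by (metis of_int_0 of_int_1 of_int_mult)
    then show "of_int (lf i) * (of_int (lf i) * (2/3)) = (if c i = 0 then 0 else 2/(3::real))"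
      by (simp add: mult.assoc[symmetric])
  qed simp
  also have "\<dots> = (\<Sum>i\<in>A. 2/3)"
    unfolding A_def by (rule sum.mono_neutral_cong_right) auto
  also have "\<dots> = 2/3 * real (card A)" by simp
  finally have ww: "w \<bullet> w = 2/3 * real (card A)" .
  obtain k :: int where k: "w \<bullet> w = 2 * of_int k" using even[OF wN] by blast
  have cA: "card A \<le> 3" using card3 unfolding A_def .
  have "real (card A) = 3 * of_int k" using ww k by simp
  then have "int (card A) = 3 * k" by (metis of_int_eq_iff of_int_mult of_int_of_nat_eq of_int_numeral)
  then have "card A = 0 \<or> card A = 3" using cA by presburger
  then show "c = (\<lambda>i. 0)"
  proof
    assume "card A = 0"
    then have "A = {}" unfolding A_def by simp
    then show ?thesis unfolding A_def by auto
  next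
    assume "card A = 3"
    then have "w \<bullet> w = 2" using ww by simp
    then have "w \<in> lattice_roots N" unfolding lattice_roots_def using wN by simp
    then obtain i u v where "w = rt i u v" using root_rt by blast
    then have "cw w = (\<lambda>j. 0)" unfolding cw_def by (simp add: cl_rt)
    then show ?thesis using cww by simp
  qed
qed

lemma tcode_CC: "tcode CC"
  by unfold_locales (use CC_0 CC_add CC_orth CC_dual CC_min in blast)+

end

context NL begin

definition Phi :: "(12 \<Rightarrow> real^24) \<Rightarrow> (12 \<Rightarrow> real^24) \<Rightarrow> (12 \<Rightarrow> real^24) \<Rightarrow> (12 \<Rightarrow> real^24) \<Rightarrow> real^24 \<Rightarrow> real^24" where
  "Phi X Y X' Y' v = (\<Sum>i\<in>UNIV. cx v (X i) (Y i) *\<^sub>R X' i + cy v (X i) (Y i) *\<^sub>R Y' i)"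

lemma Phi_linear: "linear (Phi X Y X' Y')"
proof (rule linearI)
  fix v w :: "real^24" and r :: real
  show "Phi X Y X' Y' (v + w) = Phi X Y X' Y' v + Phi X Y X' Y' w"
    unfolding Phi_def cx_def cy_def
    by (simp add: inner_add_left sum.distrib[symmetric] add_divide_distrib scaleR_add_left algebra_simps)
  show "Phi X Y X' Y' (r *\<^sub>R v) = r *\<^sub>R Phi X Y X' Y' v"
    unfolding Phi_def cx_def cy_def
    by (simp add: scaleR_sum_right scaleR_add_right algebra_simps)
qed

context
  fixes X Y X' Y' :: "12 \<Rightarrow> real^24" and \<pi> :: "12 \<Rightarrow> 12"
  assumes sp: "\<And>i. spair i (X i) (Y i)" and sp': "\<And>i. spair (\<pi> i) (X' i) (Y' i)" and injp: "inj \<pi>"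
begin

lemma Phi_XY: "Phi X Y X' Y' v \<bullet> X' j = v \<bullet> X j \<and> Phi X Y X' Y' v \<bullet> Y' j = v \<bullet> Y j"
proof -
  have cr: "X' i \<bullet> X' j = 0 \<and> X' i \<bullet> Y' j = 0 \<and> Y' i \<bullet> X' j = 0 \<and> Y' i \<bullet> Y' j = 0" if "i \<noteq> j" for i
    using sp_cross[OF sp'[of i] sp'[of j]] injp that unfolding inj_def by blast
  have e1: "Phi X Y X' Y' v \<bullet> X' j = cx v (X j) (Y j) * (X' j \<bullet> X' j) + cy v (X j) (Y j) * (Y' j \<bullet> X' j)"
    unfolding Phi_def inner_sum_left inner_add_left inner_scaleR_left
    by (rule sum3_delta) (use cr in auto)
  have e2: "Phi X Y X' Y' v \<bullet> Y' j = cx v (X j) (Y j) * (X' j \<bullet> Y' j) + cy v (X j) (Y j) * (Y' j \<bullet> Y' j)"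
    unfolding Phi_def inner_sum_left inner_add_left inner_scaleR_left
    by (rule sum3_delta) (use cr in auto)
  show ?thesis using e1 e2 sp_inner[OF sp'[of j]] unfolding cx_def cy_def by (simp add: field_simps)
qed

lemma Phi_inner: "Phi X Y X' Y' v \<bullet> Phi X Y X' Y' w = v \<bullet> w"
proof -
  have "Phi X Y X' Y' v \<bullet> Phi X Y X' Y' w
      = (\<Sum>j\<in>UNIV. cx w (X j) (Y j) * (Phi X Y X' Y' v \<bullet> X' j) + cy w (X j) (Y j) * (Phi X Y X' Y' v \<bullet> Y' j))"
    by (subst (2) Phi_def) (simp add: inner_sum_right inner_add_right)
  also have "\<dots> = (\<Sum>j\<in>UNIV. cx w (X j) (Y j) * (v \<bullet> X j) + cy w (X j) (Y j) * (v \<bullet> Y j))"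
    using Phi_XY by simp
  also have "\<dots> = v \<bullet> (\<Sum>j\<in>UNIV. cx w (X j) (Y j) *\<^sub>R X j + cy w (X j) (Y j) *\<^sub>R Y j)"
    by (simp add: inner_sum_right inner_add_right)
  also have "\<dots> = v \<bullet> w" using decomp[OF sp, of w] by simp
  finally show ?thesis .
qed

lemma Phi_onX: "Phi X Y X' Y' (X j) = X' j \<and> Phi X Y X' Y' (Y j) = Y' j"
proof -
  have cr: "X j \<bullet> X i = 0 \<and> X j \<bullet> Y i = 0 \<and> Y j \<bullet> X i = 0 \<and> Y j \<bullet> Y i = 0" if "i \<noteq> j" for i
    using sp_cross[OF sp[of j] sp[of i]] that by auto
  have "Phi X Y X' Y' (X j) = cx (X j) (X j) (Y j) *\<^sub>R X' j + cy (X j) (X j) (Y j) *\<^sub>R Y' j"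
    unfolding Phi_def by (rule sum3_delta) (use cr in \<open>auto simp: cx_def cy_def\<close>)
  moreover have "Phi X Y X' Y' (Y j) = cx (Y j) (X j) (Y j) *\<^sub>R X' j + cy (Y j) (X j) (Y j) *\<^sub>R Y' j"
    unfolding Phi_def by (rule sum3_delta) (use cr in \<open>auto simp: cx_def cy_def\<close>)
  ultimately show ?thesis using sp_inner[OF sp[of j]] unfolding cx_def cy_def by simp
qed

lemma Phi_qd: "qd v \<Longrightarrow> qd (Phi X Y X' Y' v)"
proof -
  assume q: "qd v"
  have sur: "surj \<pi>" using injp by (simp add: finite_UNIV_inj_surj)
  show ?thesis unfolding qd_def
  proof
    fix k
    obtain j where j: "k = \<pi> j" using sur by (metis surjD)
    obtain p q' r s :: int where pq: "\<forall>z. z \<bullet> a k = of_int p * (z \<bullet> X' j) + of_int q' * (z \<bullet> Y' j) \<and> z \<bullet> b k = of_int r * (z \<bullet> X' j) + of_int s * (z \<bullet> Y' j)"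
      using sp_ab_inner[OF sp'[of j]] j by blast
    have "v \<bullet> X j \<in> \<int>" "v \<bullet> Y j \<in> \<int>" using sp_qd[OF sp[of j] q] by auto
    then show "Phi X Y X' Y' v \<bullet> a k \<in> \<int> \<and> Phi X Y X' Y' v \<bullet> b k \<in> \<int>"
      using pq Phi_XY by simp
  qed
qed

lemma Phi_cl: "qd v \<Longrightarrow> cl (\<pi> j) (Phi X Y X' Y' v) = psg (\<pi> j) (X' j) (Y' j) * psg j (X j) (Y j) * cl j v"
proof -
  assume q: "qd v"
  have "(of_int \<lfloor>Phi X Y X' Y' v \<bullet> X' j - Phi X Y X' Y' v \<bullet> Y' j\<rfloor> :: 3) = psg (\<pi> j) (X' j) (Y' j) * cl (\<pi> j) (Phi X Y X' Y' v)"
    by (rule sp_psg[OF sp'[of j] Phi_qd[OF q]])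
  moreover have "(of_int \<lfloor>v \<bullet> X j - v \<bullet> Y j\<rfloor> :: 3) = psg j (X j) (Y j) * cl j v"
    by (rule sp_psg[OF sp[of j] q])
  ultimately have "psg (\<pi> j) (X' j) (Y' j) * cl (\<pi> j) (Phi X Y X' Y' v) = psg j (X j) (Y j) * cl j v"
    using Phi_XY by simp
  then have "(psg (\<pi> j) (X' j) (Y' j) * psg (\<pi> j) (X' j) (Y' j)) * cl (\<pi> j) (Phi X Y X' Y' v) = psg (\<pi> j) (X' j) (Y' j) * psg j (X j) (Y j) * cl j v"
    by (metis mult.assoc)
  then show ?thesis using sp_psg2[OF sp'[of j]] by simp
qed

end

end

lemma three_cases: "(k::3) = 0 \<or> k = 1 \<or> k = 2"
  using exhaust_3[of k] by auto

lemma UNIV3: "(UNIV :: 3 set) = {0,1,2}"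
  using three_cases by auto

lemma d3: "(0::3) \<noteq> 1" "(0::3) \<noteq> 2" "(1::3) \<noteq> 2" by simp_all

lemma sum3: "(\<Sum>k\<in>UNIV. f k) = f (0::3) + f 1 + f 2"
  unfolding UNIV3 by (simp add: d3 add.assoc)

lemma inner3: "(x::real^3) \<bullet> y = x$0 * y$0 + x$1 * y$1 + x$2 * y$2"
  unfolding inner_vec_def sum3 by simp

definition blkr :: "real^3" where "blkr = (\<chi> k. if k = 0 then 1 else if k = 1 then -1 else 0)"
definition blks :: "real^3" where "blks = (\<chi> k. if k = 0 then 0 else if k = 1 then 1 else -1)"
definition rh :: "3 \<times> 3 \<Rightarrow> real^3^(3\<times>3)" where "rh p = (\<chi> q. if q = p then blkr else 0)"
definition sh :: "3 \<times> 3 \<Rightarrow> real^3^(3\<times>3)" where "sh p = (\<chi> q. if q = p then blks else 0)"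

lemma blkr_c: "blkr$0 = 1" "blkr$1 = -1" "blkr$2 = 0"
  unfolding blkr_def using d3 by auto
lemma blks_c: "blks$0 = 0" "blks$1 = 1" "blks$2 = -1"
  unfolding blks_def using d3 by auto

lemma inner_P: "(x::real^3^(3\<times>3)) \<bullet> y = (\<Sum>q\<in>UNIV. x$q \<bullet> y$q)"
  by (simp add: inner_vec_def)

lemma inner_rh: "x \<bullet> rh p = x$p$0 - x$p$1"
proof -
  have "x \<bullet> rh p = (\<Sum>q\<in>UNIV. if q = p then x$q \<bullet> blkr else 0)"
    unfolding inner_P rh_def by (rule sum.cong) auto
  also have "\<dots> = x$p \<bullet> blkr" by simp
  finally show ?thesis unfolding inner3 blkr_c by simp
qed

lemma inner_sh: "x \<bullet> sh p = x$p$1 - x$p$2"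
proof -
  have "x \<bullet> sh p = (\<Sum>q\<in>UNIV. if q = p then x$q \<bullet> blks else 0)"
    unfolding inner_P sh_def by (rule sum.cong) auto
  also have "\<dots> = x$p \<bullet> blks" by simp
  finally show ?thesis unfolding inner3 blks_c by simp
qed

lemma rh_c: "rh p $ q $ k = (if q = p then blkr $ k else 0)" unfolding rh_def by simp
lemma sh_c: "sh p $ q $ k = (if q = p then blks $ k else 0)" unfolding sh_def by simp

lemma rhsh_inner:
  "rh p \<bullet> rh q = (if p = q then 2 else 0)" "sh p \<bullet> sh q = (if p = q then 2 else 0)"
  "rh p \<bullet> sh q = (if p = q then -1 else 0)" "sh p \<bullet> rh q = (if p = q then -1 else 0)"
  by (simp_all add: inner_rh inner_sh rh_c sh_c blkr_c blks_c)

lemma A2_int3: "A2dual_block y \<Longrightarrow> 3 * y$k \<in> \<int>"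
proof -
  assume A: "A2dual_block y"
  then have s: "y$0 + y$1 + y$2 = 0" and d: "\<And>i j. y$i - y$j \<in> \<int>" unfolding A2dual_block_def by auto
  have "k = 0 \<or> k = 1 \<or> k = 2" by (rule three_cases)
  then show ?thesis
  proof (elim disjE)
    assume "k = 0"
    then have "3 * y$k = (y$0 - y$1) + (y$0 - y$2)" using s by simp
    then show ?thesis using d by (metis Ints_add)
  next
    assume "k = 1"
    then have "3 * y$k = (y$1 - y$0) + (y$1 - y$2)" using s by simp
    then show ?thesis using d by (metis Ints_add)
  next
    assume "k = 2"
    then have "3 * y$k = (y$2 - y$0) + (y$2 - y$1)" using s by simp
    then show ?thesis using d by (metis Ints_add)
  qed
qed

lemma glue_add: "A2dual_block y \<Longrightarrow> A2dual_block z \<Longrightarrow> A2_glue (y + z) = A2_glue y + A2_glue z"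
proof -
  assume "A2dual_block y" "A2dual_block z"
  then obtain m n where m: "3 * y$0 = of_int m" and n: "3 * z$0 = of_int n" using A2_int3 by (metis Ints_cases)
  then have e: "3 * (y+z)$0 = of_int (m + n)" by (simp add: algebra_simps)
  have "A2_glue (y+z) = of_int (m+n)" by (simp only: A2_glue_def e floor_of_int)
  moreover have "A2_glue y = of_int m" by (simp only: A2_glue_def m floor_of_int)
  moreover have "A2_glue z = of_int n" by (simp only: A2_glue_def n floor_of_int)
  ultimately show ?thesis by simp
qed

lemma glue_neg: "A2dual_block y \<Longrightarrow> A2_glue (- y) = - A2_glue y"
proof -
  assume "A2dual_block y"
  then obtain m where m: "3 * y$0 = of_int m" using A2_int3 by (metis Ints_cases)
  then have e: "3 * (- y)$0 = of_int (- m)" by simp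
  have "A2_glue (- y) = of_int (- m)" by (simp only: A2_glue_def e floor_of_int)
  moreover have "A2_glue y = of_int m" by (simp only: A2_glue_def m floor_of_int)
  ultimately show ?thesis by simp
qed

lemma A2_add: "A2dual_block y \<Longrightarrow> A2dual_block z \<Longrightarrow> A2dual_block (y + z)"
proof -
  assume "A2dual_block y" "A2dual_block z"
  then have s: "y$0 + y$1 + y$2 = 0" "z$0 + z$1 + z$2 = 0" and d: "\<And>i j. y$i - y$j \<in> \<int>" "\<And>i j. z$i - z$j \<in> \<int>"
    unfolding A2dual_block_def by auto
  have "(y+z)$i - (y+z)$j \<in> \<int>" for i j
  proof -
    have "(y+z)$i - (y+z)$j = (y$i - y$j) + (z$i - z$j)" by simp
    then show ?thesis using d[of i j] by (metis Ints_add)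
  qed
  moreover have "(y+z)$0 + (y+z)$1 + (y+z)$2 = 0" using s by simp
  ultimately show ?thesis unfolding A2dual_block_def by blast
qed

lemma A2_neg: "A2dual_block y \<Longrightarrow> A2dual_block (- y)"
  unfolding A2dual_block_def by (auto simp: algebra_simps)

lemma P_add: "x \<in> P_lattice \<Longrightarrow> y \<in> P_lattice \<Longrightarrow> x + y \<in> P_lattice"
proof -
  assume x: "x \<in> P_lattice" and y: "y \<in> P_lattice"
  from x obtain \<alpha> \<beta> \<gamma> where bx: "\<forall>p. A2dual_block (x$p)" and gx: "\<forall>a b. A2_glue (x$(a,b)) = \<alpha> * a + \<beta> * b + \<gamma>"
    unfolding P_lattice_def by blast
  from y obtain \<alpha>' \<beta>' \<gamma>' where by': "\<forall>p. A2dual_block (y$p)" and gy: "\<forall>a b. A2_glue (y$(a,b)) = \<alpha>' * a + \<beta>' * b + \<gamma>'"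
    unfolding P_lattice_def by blast
  have "\<forall>p. A2dual_block ((x+y)$p)" using bx by' A2_add by simp
  moreover have "\<forall>a b. A2_glue ((x+y)$(a,b)) = (\<alpha>+\<alpha>') * a + (\<beta>+\<beta>') * b + (\<gamma>+\<gamma>')"
    using gx gy glue_add bx by' by (simp add: algebra_simps)
  ultimately show ?thesis unfolding P_lattice_def by blast
qed

lemma P_neg: "x \<in> P_lattice \<Longrightarrow> - x \<in> P_lattice"
proof -
  assume x: "x \<in> P_lattice"
  from x obtain \<alpha> \<beta> \<gamma> where bx: "\<forall>p. A2dual_block (x$p)" and gx: "\<forall>a b. A2_glue (x$(a,b)) = \<alpha> * a + \<beta> * b + \<gamma>"
    unfolding P_lattice_def by blast
  have "\<forall>p. A2dual_block ((- x)$p)" using bx A2_neg by simp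
  moreover have "\<forall>a b. A2_glue ((- x)$(a,b)) = (-\<alpha>) * a + (-\<beta>) * b + (-\<gamma>)"
    using gx glue_neg bx by (simp add: algebra_simps)
  ultimately show ?thesis unfolding P_lattice_def by blast
qed

lemma P_zero: "0 \<in> P_lattice"
  unfolding P_lattice_def A2dual_block_def A2_glue_def
  by (auto intro!: exI[of _ 0])


lemma blkr_int: "blkr$k \<in> \<int>" using three_cases[of k] blkr_c by auto
lemma blks_int: "blks$k \<in> \<int>" using three_cases[of k] blks_c by auto

lemma blk_A2: "A2dual_block blkr" "A2dual_block blks" "A2dual_block 0"
  unfolding A2dual_block_def using blkr_c blks_c blkr_int blks_int by (auto intro: Ints_diff)

lemma glue_blk: "A2_glue blkr = 0" "A2_glue blks = 0" "A2_glue 0 = 0"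
proof -
  have "(3::3) = 0" by simp
  then show "A2_glue blkr = 0" unfolding A2_glue_def blkr_c by simp
  show "A2_glue blks = 0" unfolding A2_glue_def blks_c by simp
  show "A2_glue 0 = 0" unfolding A2_glue_def by simp
qed

lemma rh_P: "rh p \<in> P_lattice"
  unfolding P_lattice_def rh_def using blk_A2 glue_blk by (auto intro!: exI[of _ 0])

lemma sh_P: "sh p \<in> P_lattice"
  unfolding P_lattice_def sh_def using blk_A2 glue_blk by (auto intro!: exI[of _ 0])

lemma P_block: "x \<in> P_lattice \<Longrightarrow> A2dual_block (x$p)"
  unfolding P_lattice_def by blast

lemma P_three: "x \<in> P_lattice \<Longrightarrow> \<exists>A B :: 3\<times>3 \<Rightarrow> int. (3::real) *\<^sub>R x = (\<Sum>p\<in>UNIV. of_int (A p) *\<^sub>R rh p + of_int (B p) *\<^sub>R sh p)"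
proof -
  assume x: "x \<in> P_lattice"
  define A where "A p = \<lfloor>3 * x$p$0\<rfloor>" for p
  define B where "B p = - \<lfloor>3 * x$p$2\<rfloor>" for p
  have A: "of_int (A p) = 3 * x$p$0" for p unfolding A_def using A2_int3[OF P_block[OF x]] by (metis Ints_cases floor_of_int)
  have B: "of_int (B p) = - 3 * x$p$2" for p unfolding B_def using A2_int3[OF P_block[OF x]] by (metis Ints_cases floor_of_int mult_minus_left of_int_minus)
  have s: "x$p$0 + x$p$1 + x$p$2 = 0" for p using P_block[OF x] unfolding A2dual_block_def by blast
  have "(3::real) *\<^sub>R x = (\<Sum>p\<in>UNIV. of_int (A p) *\<^sub>R rh p + of_int (B p) *\<^sub>R sh p)"
  proof (subst vec_eq_iff, intro allI, subst vec_eq_iff, intro allI)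
    fix q k
    have "(\<Sum>p\<in>UNIV. of_int (A p) *\<^sub>R rh p + of_int (B p) *\<^sub>R sh p) $ q $ k
        = (\<Sum>p\<in>UNIV. if p = q then of_int (A p) * blkr$k + of_int (B p) * blks$k else 0)"
      by (simp add: rh_c sh_c if_distrib cong: if_cong)
    also have "\<dots> = of_int (A q) * blkr$k + of_int (B q) * blks$k" by simp
    also have "\<dots> = 3 * x$q$k"
      using three_cases[of k] A[of q] B[of q] s[of q] blkr_c blks_c by auto
    finally show "((3::real) *\<^sub>R x) $ q $ k = (\<Sum>p\<in>UNIV. of_int (A p) *\<^sub>R rh p + of_int (B p) *\<^sub>R sh p) $ q $ k"
      by simp
  qed
  then show ?thesis by blast
qed

lemma int_R6_nz: "(u,w) \<in> R6 \<Longrightarrow> (u',w') \<in> R6 \<Longrightarrow> 2*u*u' - u*w' - w*u' + 2*w*w' \<noteq> 0"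
  unfolding R6_def by auto

context NL begin

lemma term_int: "qd v \<Longrightarrow> cl i v = 0 \<Longrightarrow> \<exists>m k. cx v (a i) (b i) *\<^sub>R a i + cy v (a i) (b i) *\<^sub>R b i = rt i m k"
proof -
  assume q: "qd v" and c: "cl i v = 0"
  define M where "M = \<lfloor>v \<bullet> a i\<rfloor>"
  define K where "K = \<lfloor>v \<bullet> b i\<rfloor>"
  have MK: "v \<bullet> a i = of_int M" "v \<bullet> b i = of_int K" using qd_int[OF q] unfolding M_def K_def by auto
  have "(of_int (M - K) :: 3) = 0" using c clI[OF MK] by simp
  then obtain t where t: "M - K = 3 * t" using of_int3_0 by (metis dvd_def)
  have "cx v (a i) (b i) = of_int (M - t)" unfolding cx_def MK using t by (simp add: field_simps) 
  moreover have "cy v (a i) (b i) = of_int (K + t)" unfolding cy_def MK using t by (simp add: field_simps)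
  ultimately show ?thesis unfolding rt_def by (intro exI[of _ "M - t"] exI[of _ "K + t"]) simp
qed

lemma cl_sum_rt: "cl j (\<Sum>i\<in>F. rt i (m i) (k i)) = 0"
proof (cases "finite F")
  case True
  have "(\<Sum>i\<in>F. rt i (m i) (k i)) \<bullet> a j = (\<Sum>i\<in>F. if i = j then of_int (2 * m i - k i) else 0)"
    by (simp add: inner_sum_left rt_a)
  also have "\<dots> = of_int (if j \<in> F then 2 * m j - k j else 0)" using True by simp
  finally have 1: "(\<Sum>i\<in>F. rt i (m i) (k i)) \<bullet> a j = of_int (if j \<in> F then 2 * m j - k j else 0)" .
  have "(\<Sum>i\<in>F. rt i (m i) (k i)) \<bullet> b j = (\<Sum>i\<in>F. if i = j then of_int (2 * k i - m i) else 0)"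
    by (simp add: inner_sum_left rt_b)
  also have "\<dots> = of_int (if j \<in> F then 2 * k j - m j else 0)" using True by simp
  finally have 2: "(\<Sum>i\<in>F. rt i (m i) (k i)) \<bullet> b j = of_int (if j \<in> F then 2 * k j - m j else 0)" .
  have "cl j (\<Sum>i\<in>F. rt i (m i) (k i)) = of_int ((if j \<in> F then 2 * m j - k j else 0) - (if j \<in> F then 2 * k j - m j else 0))"
    by (rule clI[OF 1 2])
  also have "\<dots> = 0" by (subst of_int3_0) auto
  finally show ?thesis .
next
  case False then show ?thesis by (simp add: cl_zero)
qed

end

locale NLe = NL +
  fixes \<iota> :: "real^3^(3\<times>3) \<Rightarrow> real^24"
  assumes prim: "primitive_embedding \<iota> P_lattice N"
begin

lemma iP: "x \<in> P_lattice \<Longrightarrow> \<iota> x \<in> N"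
  using prim unfolding primitive_embedding_def isometric_embedding_def by blast
lemma iadd: "x \<in> P_lattice \<Longrightarrow> y \<in> P_lattice \<Longrightarrow> \<iota> (x + y) = \<iota> x + \<iota> y"
  using prim unfolding primitive_embedding_def isometric_embedding_def by blast
lemma iinner: "x \<in> P_lattice \<Longrightarrow> y \<in> P_lattice \<Longrightarrow> \<iota> x \<bullet> \<iota> y = x \<bullet> y"
  using prim unfolding primitive_embedding_def isometric_embedding_def by blast
lemma iprim: "v \<in> N \<Longrightarrow> (n::int) \<noteq> 0 \<Longrightarrow> of_int n *\<^sub>R v \<in> \<iota> ` P_lattice \<Longrightarrow> v \<in> \<iota> ` P_lattice"
  using prim unfolding primitive_embedding_def by blast

lemma i0: "\<iota> 0 = 0"
  using iadd[OF P_zero P_zero] by simp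

lemma ineg: "x \<in> P_lattice \<Longrightarrow> \<iota> (- x) = - \<iota> x"
proof -
  assume x: "x \<in> P_lattice"
  have "\<iota> (x + - x) = \<iota> x + \<iota> (- x)" by (rule iadd[OF x P_neg[OF x]])
  then have "\<iota> x + \<iota> (- x) = 0" using i0 by simp
  then show ?thesis by (simp add: add_eq_0_iff)
qed

lemma ismul_nat: "x \<in> P_lattice \<Longrightarrow> of_nat n *\<^sub>R x \<in> P_lattice \<and> \<iota> (of_nat n *\<^sub>R x) = of_nat n *\<^sub>R \<iota> x"
proof (induction n)
  case 0 then show ?case using P_zero i0 by simp
next
  case (Suc n)
  have e: "of_nat (Suc n) *\<^sub>R x = x + of_nat n *\<^sub>R x" by (simp add: scaleR_add_left)
  show ?case unfolding e using Suc P_add iadd by (simp add: scaleR_add_left)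
qed

lemma ismul: "x \<in> P_lattice \<Longrightarrow> of_int k *\<^sub>R x \<in> P_lattice \<and> \<iota> (of_int k *\<^sub>R x) = of_int k *\<^sub>R \<iota> x"
proof (cases "k \<ge> 0")
  case True
  then obtain n where "k = int n" by (metis nonneg_eq_int)
  then show "x \<in> P_lattice \<Longrightarrow> ?thesis" using ismul_nat by simp
next
  case False
  then obtain n where n: "k = - int n" by (metis nonneg_eq_int neg_0_le_iff_le minus_minus linear)
  assume x: "x \<in> P_lattice"
  have "of_int k *\<^sub>R x = - (of_nat n *\<^sub>R x)" using n by simp
  then show ?thesis using ismul_nat[OF x, of n] P_neg ineg n by simp
qed

lemma isum: "(\<Sum>p\<in>F. of_int (A p) *\<^sub>R rh p + of_int (B p) *\<^sub>R sh p) \<in> P_lattice \<and>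
   \<iota> (\<Sum>p\<in>F. of_int (A p) *\<^sub>R rh p + of_int (B p) *\<^sub>R sh p) = (\<Sum>p\<in>F. of_int (A p) *\<^sub>R \<iota> (rh p) + of_int (B p) *\<^sub>R \<iota> (sh p))"
proof (induction F rule: infinite_finite_induct)
  case (infinite F) then show ?case using P_zero i0 by simp
next
  case empty then show ?case using P_zero i0 by simp
next
  case (insert p F)
  have r: "of_int (A p) *\<^sub>R rh p \<in> P_lattice" "\<iota> (of_int (A p) *\<^sub>R rh p) = of_int (A p) *\<^sub>R \<iota> (rh p)"
    using ismul[OF rh_P] by auto
  have s: "of_int (B p) *\<^sub>R sh p \<in> P_lattice" "\<iota> (of_int (B p) *\<^sub>R sh p) = of_int (B p) *\<^sub>R \<iota> (sh p)"
    using ismul[OF sh_P] by auto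
  have rs: "of_int (A p) *\<^sub>R rh p + of_int (B p) *\<^sub>R sh p \<in> P_lattice" using P_add r s by blast
  show ?case using insert P_add[OF rs] iadd[OF rs] r s iadd[OF r(1) s(1)] by simp
qed

lemma ithree: "x \<in> P_lattice \<Longrightarrow> \<exists>A B :: 3\<times>3 \<Rightarrow> int. 3 *\<^sub>R \<iota> x = (\<Sum>p\<in>UNIV. of_int (A p) *\<^sub>R \<iota> (rh p) + of_int (B p) *\<^sub>R \<iota> (sh p))"
proof -
  assume x: "x \<in> P_lattice"
  obtain A B where e: "(3::real) *\<^sub>R x = (\<Sum>p\<in>UNIV. of_int (A p) *\<^sub>R rh p + of_int (B p) *\<^sub>R sh p)"
    using P_three[OF x] by blast
  have "3 *\<^sub>R \<iota> x = \<iota> ((3::real) *\<^sub>R x)" using ismul_nat[OF x, of 3] by simp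
  also have "\<dots> = (\<Sum>p\<in>UNIV. of_int (A p) *\<^sub>R \<iota> (rh p) + of_int (B p) *\<^sub>R \<iota> (sh p))"
    unfolding e using isum by blast
  finally show ?thesis by blast
qed

lemma iroot: "\<iota> (rh p) \<in> lattice_roots N" "\<iota> (sh p) \<in> lattice_roots N"
  unfolding lattice_roots_def using iP[OF rh_P] iP[OF sh_P] iinner[OF rh_P rh_P] iinner[OF sh_P sh_P]
  by (auto simp: rhsh_inner)

definition \<sigma> :: "3\<times>3 \<Rightarrow> 12" where
  "\<sigma> p = (SOME i. \<exists>u w. (u,w) \<in> R6 \<and> \<iota> (rh p) = rt i u w)"

lemma sig_sp: "spair (\<sigma> p) (\<iota> (rh p)) (\<iota> (sh p))"
proof -
  have "\<exists>i u w. (u,w) \<in> R6 \<and> \<iota> (rh p) = rt i u w" using root_rt[OF iroot(1)] by blast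
  then have "\<exists>u w. (u,w) \<in> R6 \<and> \<iota> (rh p) = rt (\<sigma> p) u w"
    unfolding \<sigma>_def by (rule someI_ex[where P="\<lambda>i. \<exists>u w. (u,w) \<in> R6 \<and> \<iota> (rh p) = rt i u w", OF exE]) blast
  then obtain u1 w1 where 1: "(u1,w1) \<in> R6" "\<iota> (rh p) = rt (\<sigma> p) u1 w1" by blast
  obtain j u2 w2 where 2: "(u2,w2) \<in> R6" "\<iota> (sh p) = rt j u2 w2" using root_rt[OF iroot(2)] by blast
  have "\<iota> (rh p) \<bullet> \<iota> (sh p) = -1" using iinner[OF rh_P sh_P] by (simp add: rhsh_inner)
  then have e: "rt (\<sigma> p) u1 w1 \<bullet> rt j u2 w2 = -1" using 1 2 by simp
  then have j: "j = \<sigma> p" by (simp add: rt_inner split: if_splits)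
  then have "real_of_int (2*u1*u2 - u1*w2 - w1*u2 + 2*w1*w2) = -1" using e by (simp add: rt_inner)
  then have "2*u1*u2 - u1*w2 - w1*u2 + 2*w1*w2 = -1" by linarith
  then show ?thesis unfolding spair_def using 1 2 j by blast
qed

lemma sig_inj: "inj \<sigma>"
proof (rule injI)
  fix p q assume e: "\<sigma> p = \<sigma> q"
  show "p = q"
  proof (rule ccontr)
    assume ne: "p \<noteq> q"
    have z: "\<iota> (rh p) \<bullet> \<iota> (rh q) = 0" using iinner[OF rh_P rh_P] ne by (simp add: rhsh_inner)
    obtain u1 w1 u2 w2 where "(u1,w1) \<in> R6" "\<iota> (rh p) = rt (\<sigma> p) u1 w1" using sig_sp[of p] by (elim spE) blast
    moreover obtain u1' w1' u2' w2' where "(u1',w1') \<in> R6" "\<iota> (rh q) = rt (\<sigma> q) u1' w1'" using sig_sp[of q] by (elim spE) blast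
    ultimately have "real_of_int (2*u1*u1' - u1*w1' - w1*u1' + 2*w1*w1') = 0" using z e by (simp add: rt_inner)
    then have "2*u1*u1' - u1*w1' - w1*u1' + 2*w1*w1' = 0" by linarith
    then show False using int_R6_nz \<open>(u1,w1) \<in> R6\<close> \<open>(u1',w1') \<in> R6\<close> by blast
  qed
qed

abbreviation S where "S \<equiv> range \<sigma>"

lemma card_S: "card S = 9" "card (- S) = 3"
proof -
  show c: "card S = 9" using card_image[OF sig_inj] by simp
  have "card (- S) = card (UNIV :: 12 set) - card S"
    unfolding Compl_eq_Diff_UNIV by (rule card_Diff_subset) auto
  then show "card (- S) = 3" using c by simp
qed

definition XX :: "12 \<Rightarrow> real^24" where "XX i = (if i \<in> S then \<iota> (rh (inv \<sigma> i)) else a i)"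
definition YY :: "12 \<Rightarrow> real^24" where "YY i = (if i \<in> S then \<iota> (sh (inv \<sigma> i)) else b i)"

lemma XY_sig: "XX (\<sigma> p) = \<iota> (rh p)" "YY (\<sigma> p) = \<iota> (sh p)"
  unfolding XX_def YY_def using inv_f_f[OF sig_inj] by auto

lemma XY_out: "i \<notin> S \<Longrightarrow> XX i = a i \<and> YY i = b i"
  unfolding XX_def YY_def by auto

lemma spXY: "spair i (XX i) (YY i)"
proof (cases "i \<in> S")
  case True
  then obtain p where "i = \<sigma> p" by blast
  then show ?thesis using XY_sig sig_sp by simp
next
  case False then show ?thesis using XY_out sp_ab_pair by simp
qed

lemma i_perp: "x \<in> P_lattice \<Longrightarrow> t \<notin> S \<Longrightarrow> \<iota> x \<bullet> a t = 0 \<and> \<iota> x \<bullet> b t = 0"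
proof -
  assume x: "x \<in> P_lattice" and t: "t \<notin> S"
  obtain A B where e: "3 *\<^sub>R \<iota> x = (\<Sum>p\<in>UNIV. of_int (A p) *\<^sub>R \<iota> (rh p) + of_int (B p) *\<^sub>R \<iota> (sh p))"
    using ithree[OF x] by blast
  have o: "\<iota> (rh p) \<bullet> a t = 0 \<and> \<iota> (rh p) \<bullet> b t = 0 \<and> \<iota> (sh p) \<bullet> a t = 0 \<and> \<iota> (sh p) \<bullet> b t = 0" for p
    using sp_other[OF sig_sp[of p], of t] t by auto
  have "(3 *\<^sub>R \<iota> x) \<bullet> a t = 0" "(3 *\<^sub>R \<iota> x) \<bullet> b t = 0"
    unfolding e by (simp_all add: inner_sum_left inner_add_left o)
  then show ?thesis by simp
qed

lemma cl_out: "x \<in> P_lattice \<Longrightarrow> t \<notin> S \<Longrightarrow> cl t (\<iota> x) = 0"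
  using i_perp unfolding cl_def by simp

definition gl :: "real^3^(3\<times>3) \<Rightarrow> 3\<times>3 \<Rightarrow> 3" where
  "gl x p = of_int \<lfloor>x \<bullet> rh p - x \<bullet> sh p\<rfloor>"

lemma cl_in: "x \<in> P_lattice \<Longrightarrow> cl (\<sigma> p) (\<iota> x) = psg (\<sigma> p) (\<iota> (rh p)) (\<iota> (sh p)) * gl x p"
proof -
  assume x: "x \<in> P_lattice"
  have "(of_int \<lfloor>\<iota> x \<bullet> \<iota> (rh p) - \<iota> x \<bullet> \<iota> (sh p)\<rfloor> :: 3) = psg (\<sigma> p) (\<iota> (rh p)) (\<iota> (sh p)) * cl (\<sigma> p) (\<iota> x)"
    by (rule sp_psg[OF sig_sp qdN[OF iP[OF x]]])
  then have "gl x p = psg (\<sigma> p) (\<iota> (rh p)) (\<iota> (sh p)) * cl (\<sigma> p) (\<iota> x)"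
    unfolding gl_def using iinner[OF x rh_P] iinner[OF x sh_P] by simp
  then have "psg (\<sigma> p) (\<iota> (rh p)) (\<iota> (sh p)) * gl x p = (psg (\<sigma> p) (\<iota> (rh p)) (\<iota> (sh p)) * psg (\<sigma> p) (\<iota> (rh p)) (\<iota> (sh p))) * cl (\<sigma> p) (\<iota> x)"
    by (simp add: mult.assoc)
  then show ?thesis using sp_psg2[OF sig_sp] by simp
qed

lemma prim_code: "v \<in> N \<Longrightarrow> (\<And>t. t \<notin> S \<Longrightarrow> cl t v = 0) \<Longrightarrow> \<exists>x\<in>P_lattice. cw (\<iota> x) = cw v"
proof -
  assume vN: "v \<in> N" and c0: "\<And>t. t \<notin> S \<Longrightarrow> cl t v = 0"
  have q: "qd v" using qdN[OF vN] .
  define tm where "tm i = cx v (XX i) (YY i) *\<^sub>R XX i + cy v (XX i) (YY i) *\<^sub>R YY i" for i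
  have dec: "v = (\<Sum>i\<in>UNIV. tm i)" unfolding tm_def by (rule decomp[OF spXY])
  have "\<forall>i\<in>-S. \<exists>m k. tm i = rt i m k"
  proof
    fix i assume i: "i \<in> -S"
    then have "i \<notin> S" by simp
    then show "\<exists>m k. tm i = rt i m k" unfolding tm_def using XY_out term_int[OF q c0] by simp
  qed
  then obtain mm kk where mk: "\<And>i. i \<in> -S \<Longrightarrow> tm i = rt i (mm i) (kk i)" by metis
  define v'' where "v'' = (\<Sum>i\<in>-S. tm i)"
  have v''e: "v'' = (\<Sum>i\<in>-S. rt i (mm i) (kk i))" unfolding v''_def by (rule sum.cong) (auto simp: mk)
  have v''N: "v'' \<in> N" unfolding v''e by (rule Nsum) (auto simp: rt_N)
  have clv'': "cl j v'' = 0" for j unfolding v''e by (rule cl_sum_rt)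
  define v' where "v' = (\<Sum>i\<in>S. tm i)"
  have vv: "v = v' + v''" unfolding dec v'_def v''_def by (rule sum_UNIV_split)
  have v'N: "v' \<in> N" using Ndiff[OF vN v''N] vv by (simp add: eq_diff_eq)
  have cwv': "cw v' = cw v"
  proof -
    have "cl j v' = cl j v" for j
      using cl_diff[OF q qdN[OF v''N], of j] clv''[of j] vv by (simp add: eq_diff_eq)
    then show ?thesis unfolding cw_def by auto
  qed
  define A where "A p = \<lfloor>2 * (v \<bullet> \<iota> (rh p)) + v \<bullet> \<iota> (sh p)\<rfloor>" for p
  define B where "B p = \<lfloor>v \<bullet> \<iota> (rh p) + 2 * (v \<bullet> \<iota> (sh p))\<rfloor>" for p
  have Ae: "of_int (A p) = 2 * (v \<bullet> \<iota> (rh p)) + v \<bullet> \<iota> (sh p)" for p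
  proof -
    have "2 * (v \<bullet> \<iota> (rh p)) + v \<bullet> \<iota> (sh p) \<in> \<int>" using Nint[OF vN iP[OF rh_P]] Nint[OF vN iP[OF sh_P]] by simp
    then show ?thesis unfolding A_def by (metis Ints_cases floor_of_int)
  qed
  have Be: "of_int (B p) = v \<bullet> \<iota> (rh p) + 2 * (v \<bullet> \<iota> (sh p))" for p
  proof -
    have "v \<bullet> \<iota> (rh p) + 2 * (v \<bullet> \<iota> (sh p)) \<in> \<int>" using Nint[OF vN iP[OF rh_P]] Nint[OF vN iP[OF sh_P]] by simp
    then show ?thesis unfolding B_def by (metis Ints_cases floor_of_int)
  qed
  have "3 *\<^sub>R v' = (\<Sum>i\<in>S. 3 *\<^sub>R tm i)" unfolding v'_def by (simp add: scaleR_sum_right)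
  also have "\<dots> = (\<Sum>p\<in>UNIV. 3 *\<^sub>R tm (\<sigma> p))" by (simp add: sum.reindex[OF sig_inj])
  also have "\<dots> = (\<Sum>p\<in>UNIV. of_int (A p) *\<^sub>R \<iota> (rh p) + of_int (B p) *\<^sub>R \<iota> (sh p))"
  proof (rule sum.cong)
    fix p
    have e1: "3 * cx v (\<iota> (rh p)) (\<iota> (sh p)) = of_int (A p)" unfolding cx_def Ae by simp
    have e2: "3 * cy v (\<iota> (rh p)) (\<iota> (sh p)) = of_int (B p)" unfolding cy_def Be by simp
    have "3 *\<^sub>R tm (\<sigma> p) = (3 * cx v (XX (\<sigma> p)) (YY (\<sigma> p))) *\<^sub>R XX (\<sigma> p) + (3 * cy v (XX (\<sigma> p)) (YY (\<sigma> p))) *\<^sub>R YY (\<sigma> p)"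
      unfolding tm_def by (simp only: scaleR_add_right scaleR_scaleR)
    then show "3 *\<^sub>R tm (\<sigma> p) = of_int (A p) *\<^sub>R \<iota> (rh p) + of_int (B p) *\<^sub>R \<iota> (sh p)"
      by (simp only: XY_sig e1 e2)
  qed simp
  also have "\<dots> = \<iota> (\<Sum>p\<in>UNIV. of_int (A p) *\<^sub>R rh p + of_int (B p) *\<^sub>R sh p)"
    using isum by metis
  finally have e: "3 *\<^sub>R v' = \<iota> (\<Sum>p\<in>UNIV. of_int (A p) *\<^sub>R rh p + of_int (B p) *\<^sub>R sh p)" .
  have m: "(\<Sum>p\<in>UNIV. of_int (A p) *\<^sub>R rh p + of_int (B p) *\<^sub>R sh p) \<in> P_lattice" using isum by blast
  have "3 *\<^sub>R v' \<in> \<iota> ` P_lattice" unfolding e using m by (rule imageI)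
  then have "of_int 3 *\<^sub>R v' \<in> \<iota> ` P_lattice" by simp
  then have "v' \<in> \<iota> ` P_lattice" using iprim[OF v'N, of 3] by simp
  then obtain x where x: "x \<in> P_lattice" "v' = \<iota> x" by blast
  then show ?thesis using cwv' by blast
qed

end

context NL begin

lemma main_NL:
  assumes e1: "NLe N a b \<iota>1" and e2: "NLe N a b \<iota>2"
  shows "\<exists>\<Phi>. lattice_aut N \<Phi> \<and> (\<forall>x\<in>P_lattice. \<Phi> (\<iota>1 x) = \<iota>2 x)"
proof -
  interpret E1: NLe N a b \<iota>1 by (rule e1)
  interpret E2: NLe N a b \<iota>2 by (rule e2)
  interpret TC: tcode CC by (rule tcode_CC)
  define \<rho> where "\<rho> j = E2.\<sigma> (inv E1.\<sigma> j)" for j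
  define \<psi>1 where "\<psi>1 p = psg (E1.\<sigma> p) (\<iota>1 (rh p)) (\<iota>1 (sh p))" for p
  define \<psi>2 where "\<psi>2 p = psg (E2.\<sigma> p) (\<iota>2 (rh p)) (\<iota>2 (sh p))" for p
  define \<delta> where "\<delta> j = (if j \<in> E1.S then \<psi>2 (inv E1.\<sigma> j) * \<psi>1 (inv E1.\<sigma> j) else 1)" for j
  have inv1: "inv E1.\<sigma> (E1.\<sigma> p) = p" for p using inv_f_f[OF E1.sig_inj] .
  have rho_s: "\<rho> (E1.\<sigma> p) = E2.\<sigma> p" for p unfolding \<rho>_def inv1 ..
  have delta_s: "\<delta> (E1.\<sigma> p) = \<psi>2 p * \<psi>1 p" for p unfolding \<delta>_def inv1 by simp
  have psi1: "\<psi>1 p * \<psi>1 p = 1" for p unfolding \<psi>1_def by (rule sp_psg2[OF E1.sig_sp])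
  have psi2: "\<psi>2 p * \<psi>2 p = 1" for p unfolding \<psi>2_def by (rule sp_psg2[OF E2.sig_sp])
  have dd: "\<delta> j * \<delta> j = 1" for j
  proof (cases "j \<in> E1.S")
    case True
    then obtain p where "j = E1.\<sigma> p" by blast
    then have "\<delta> j * \<delta> j = (\<psi>2 p * \<psi>2 p) * (\<psi>1 p * \<psi>1 p)" using delta_s by (simp add: algebra_simps)
    then show ?thesis using psi1 psi2 by simp
  next
    case False then show ?thesis unfolding \<delta>_def by simp
  qed
  have rho_bij: "bij_betw \<rho> (- (- E1.S)) (- (- E2.S))"
  proof -
    have "bij_betw \<rho> E1.S E2.S"
      unfolding bij_betw_def
    proof
      show "inj_on \<rho> E1.S"
      proof (rule inj_onI)
        fix i j assume "i \<in> E1.S" "j \<in> E1.S" and e: "\<rho> i = \<rho> j"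
        then obtain p q where pq: "i = E1.\<sigma> p" "j = E1.\<sigma> q" by blast
        then have "E2.\<sigma> p = E2.\<sigma> q" using e rho_s by simp
        then have "p = q" using injD[OF E2.sig_inj] by blast
        then show "i = j" using pq by simp
      qed
      show "\<rho> ` E1.S = E2.S" using rho_s by (auto simp: image_iff) (metis rho_s)
    qed
    then show ?thesis by simp
  qed
  have cl1: "cl (E1.\<sigma> p) (\<iota>1 x) = \<psi>1 p * E1.gl x p" if "x \<in> P_lattice" for x p
    unfolding \<psi>1_def using E1.cl_in[OF that] .
  have cl2: "cl (E2.\<sigma> p) (\<iota>2 x) = \<psi>2 p * E2.gl x p" if "x \<in> P_lattice" for x p
    unfolding \<psi>2_def using E2.cl_in[OF that] .
  have H12: "\<exists>c'\<in>CC. (\<forall>t\<in>- E2.S. c' t = 0) \<and> (\<forall>j\<in>- (- E1.S). c' (\<rho> j) = \<delta> j * c j)"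
    if c: "c \<in> CC" and cz: "\<forall>t\<in>- E1.S. c t = 0" for c
  proof -
    obtain v where v: "v \<in> N" "c = cw v" using c unfolding CC_def by auto
    have "cl t v = 0" if "t \<notin> E1.S" for t using cz that v(2) unfolding cw_def by simp
    then obtain x where x: "x \<in> P_lattice" "cw (\<iota>1 x) = cw v"
      using E1.prim_code[OF v(1)] by blast
    have "cw (\<iota>2 x) \<in> CC" unfolding CC_def using E2.iP[OF x(1)] by blast
    moreover have "\<forall>t\<in>- E2.S. cw (\<iota>2 x) t = 0" unfolding cw_def using E2.cl_out[OF x(1)] by simp
    moreover have "\<forall>j\<in>- (- E1.S). cw (\<iota>2 x) (\<rho> j) = \<delta> j * c j"
    proof
      fix j assume "j \<in> - (- E1.S)"
      then obtain p where j: "j = E1.\<sigma> p" by auto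
      have "c j = cw (\<iota>1 x) j" using x(2) v(2) by simp
      also have "\<dots> = \<psi>1 p * E1.gl x p" unfolding cw_def j by (rule cl1[OF x(1)])
      finally have g: "c j = \<psi>1 p * E1.gl x p" .
      have "\<delta> j * c j = (\<psi>2 p * \<psi>1 p) * (\<psi>1 p * E1.gl x p)" using delta_s g j by simp
      also have "\<dots> = \<psi>2 p * (\<psi>1 p * \<psi>1 p) * E1.gl x p" by (simp add: mult_ac)
      also have "\<dots> = \<psi>2 p * E1.gl x p" using psi1 by simp
      also have "\<dots> = cw (\<iota>2 x) (\<rho> j)" unfolding cw_def j rho_s cl2[OF x(1)] ..
      finally show "cw (\<iota>2 x) (\<rho> j) = \<delta> j * c j" by simp
    qed
    ultimately show ?thesis by blast
  qed
  have H21: "\<exists>c\<in>CC. (\<forall>t\<in>- E1.S. c t = 0) \<and> (\<forall>j\<in>- (- E1.S). c' (\<rho> j) = \<delta> j * c j)"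
    if c': "c' \<in> CC" and cz: "\<forall>t\<in>- E2.S. c' t = 0" for c'
  proof -
    obtain v where v: "v \<in> N" "c' = cw v" using c' unfolding CC_def by auto
    have "cl t v = 0" if "t \<notin> E2.S" for t using cz that v(2) unfolding cw_def by simp
    then obtain x where x: "x \<in> P_lattice" "cw (\<iota>2 x) = cw v"
      using E2.prim_code[OF v(1)] by blast
    have "cw (\<iota>1 x) \<in> CC" unfolding CC_def using E1.iP[OF x(1)] by blast
    moreover have "\<forall>t\<in>- E1.S. cw (\<iota>1 x) t = 0" unfolding cw_def using E1.cl_out[OF x(1)] by simp
    moreover have "\<forall>j\<in>- (- E1.S). c' (\<rho> j) = \<delta> j * cw (\<iota>1 x) j"
    proof
      fix j assume "j \<in> - (- E1.S)"
      then obtain p where j: "j = E1.\<sigma> p" by auto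
      have "c' (\<rho> j) = cw (\<iota>2 x) (\<rho> j)" using x(2) v(2) by simp
      also have "\<dots> = \<psi>2 p * E2.gl x p" unfolding cw_def j rho_s by (rule cl2[OF x(1)])
      finally have g: "c' (\<rho> j) = \<psi>2 p * E1.gl x p" .
      have "\<delta> j * cw (\<iota>1 x) j = (\<psi>2 p * \<psi>1 p) * (\<psi>1 p * E1.gl x p)"
        unfolding j delta_s cw_def cl1[OF x(1)] ..
      also have "\<dots> = \<psi>2 p * (\<psi>1 p * \<psi>1 p) * E1.gl x p" by (simp add: mult_ac)
      also have "\<dots> = \<psi>2 p * E1.gl x p" using psi1 by simp
      finally show "c' (\<rho> j) = \<delta> j * cw (\<iota>1 x) j" using g by simp
    qed
    ultimately show ?thesis by blast
  qed
  have "\<exists>\<tau> \<epsilon>. bij_betw \<tau> (- E1.S) (- E2.S) \<and> (\<forall>t. \<epsilon> t * \<epsilon> t = 1) \<and>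
     (\<forall>c\<in>CC. \<exists>c'\<in>CC. (\<forall>j\<in>- (- E1.S). c' (\<rho> j) = \<delta> j * c j) \<and> (\<forall>t\<in>- E1.S. c' (\<tau> t) = \<epsilon> t * c t))"
    apply (rule TC.code_extend[of "- E1.S" "- E2.S" \<rho> \<delta>])
         apply (rule E1.card_S(2))
        apply (rule E2.card_S(2))
       apply (rule rho_bij)
      apply (rule dd)
     apply (rule H12; assumption)
    apply (rule H21; assumption)
    done
  then obtain \<tau> \<epsilon> where tau: "bij_betw \<tau> (- E1.S) (- E2.S)" and eps0: "\<forall>t. \<epsilon> t * \<epsilon> t = 1"
    and ext0: "\<forall>c\<in>CC. \<exists>c'\<in>CC. (\<forall>j\<in>- (- E1.S). c' (\<rho> j) = \<delta> j * c j) \<and> (\<forall>t\<in>- E1.S. c' (\<tau> t) = \<epsilon> t * c t)"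
    by (elim exE conjE)
  have eps: "\<epsilon> t * \<epsilon> t = 1" for t using eps0 by blast
  have ext: "\<exists>c'\<in>CC. (\<forall>j\<in>- (- E1.S). c' (\<rho> j) = \<delta> j * c j) \<and> (\<forall>t\<in>- E1.S. c' (\<tau> t) = \<epsilon> t * c t)"
    if "c \<in> CC" for c using ext0 that by blast
  define \<pi> where "\<pi> j = (if j \<in> E1.S then \<rho> j else \<tau> j)" for j
  have pi_s: "\<pi> (E1.\<sigma> p) = E2.\<sigma> p" for p unfolding \<pi>_def rho_s by simp
  have pi_t: "j \<notin> E1.S \<Longrightarrow> \<pi> j = \<tau> j \<and> \<tau> j \<notin> E2.S" for j
    unfolding \<pi>_def using tau by (auto simp: bij_betw_def)
  have injpi: "inj \<pi>"
  proof (rule injI)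
    fix i j assume e: "\<pi> i = \<pi> j"
    show "i = j"
    proof (cases "i \<in> E1.S"; cases "j \<in> E1.S")
      assume "i \<in> E1.S" "j \<in> E1.S"
      then obtain p q where "i = E1.\<sigma> p" "j = E1.\<sigma> q" by blast
      then have "E2.\<sigma> p = E2.\<sigma> q" using e pi_s by simp
      then have "p = q" using injD[OF E2.sig_inj] by blast
      then show ?thesis using \<open>i = E1.\<sigma> p\<close> \<open>j = E1.\<sigma> q\<close> by simp
    next
      assume "i \<in> E1.S" "j \<notin> E1.S"
      then obtain p where "i = E1.\<sigma> p" by blast
      then show ?thesis using e pi_s pi_t[OF \<open>j \<notin> E1.S\<close>] by (metis rangeI)
    next
      assume "i \<notin> E1.S" "j \<in> E1.S"
      then obtain p where "j = E1.\<sigma> p" by blast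
      then show ?thesis using e pi_s pi_t[OF \<open>i \<notin> E1.S\<close>] by (metis rangeI)
    next
      assume "i \<notin> E1.S" "j \<notin> E1.S"
      then show ?thesis using e pi_t tau unfolding bij_betw_def inj_on_def by auto
    qed
  qed
  define X' where "X' j = (if j \<in> E1.S then \<iota>2 (rh (inv E1.\<sigma> j)) else if \<epsilon> j = 1 then a (\<tau> j) else - a (\<tau> j))" for j
  define Y' where "Y' j = (if j \<in> E1.S then \<iota>2 (sh (inv E1.\<sigma> j)) else if \<epsilon> j = 1 then b (\<tau> j) else - b (\<tau> j))" for j
  have X's: "X' (E1.\<sigma> p) = \<iota>2 (rh p)" "Y' (E1.\<sigma> p) = \<iota>2 (sh p)" for p
    unfolding X'_def Y'_def inv1 by auto
  have sp': "spair (\<pi> j) (X' j) (Y' j)" for j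
  proof (cases "j \<in> E1.S")
    case True
    then obtain p where j: "j = E1.\<sigma> p" by blast
    show ?thesis unfolding j pi_s X's using E2.sig_sp .
  next
    case False
    then show ?thesis unfolding X'_def Y'_def using pi_t[OF False] sp_ab_pair sp_neg_ab_pair by auto
  qed
  have psg_t: "psg (\<pi> j) (X' j) (Y' j) = \<epsilon> j" if j: "j \<notin> E1.S" for j
  proof -
    have "\<epsilon> j = 1 \<or> \<epsilon> j = -1" using eps[of j] F3_cases[of "\<epsilon> j"] by auto
    then show ?thesis unfolding X'_def Y'_def using j pi_t[OF j] psg_ab psg_nab by auto
  qed
  define \<Phi> where "\<Phi> = Phi E1.XX E1.YY X' Y'"
  note sp1 = E1.spXY
  have lin: "linear \<Phi>" unfolding \<Phi>_def by (rule Phi_linear)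
  have inn: "\<Phi> v \<bullet> \<Phi> w = v \<bullet> w" for v w unfolding \<Phi>_def by (rule Phi_inner[OF sp1 sp' injpi])
  have ot: "orthogonal_transformation \<Phi>" unfolding orthogonal_transformation_def using lin inn by blast
  have onX: "\<Phi> (\<iota>1 (rh p)) = \<iota>2 (rh p) \<and> \<Phi> (\<iota>1 (sh p)) = \<iota>2 (sh p)" for p
    using Phi_onX[OF sp1 sp' injpi, of "E1.\<sigma> p"] unfolding \<Phi>_def E1.XY_sig X's by simp
  have comm: "\<Phi> (\<iota>1 x) = \<iota>2 x" if x: "x \<in> P_lattice" for x
  proof -
    obtain A B where e: "(3::real) *\<^sub>R x = (\<Sum>p\<in>UNIV. of_int (A p) *\<^sub>R rh p + of_int (B p) *\<^sub>R sh p)"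
      using P_three[OF x] by blast
    have a1: "3 *\<^sub>R \<iota>1 x = (\<Sum>p\<in>UNIV. of_int (A p) *\<^sub>R \<iota>1 (rh p) + of_int (B p) *\<^sub>R \<iota>1 (sh p))"
      using E1.ismul_nat[OF x, of 3] E1.isum[of A B UNIV] e by simp
    have a2: "3 *\<^sub>R \<iota>2 x = (\<Sum>p\<in>UNIV. of_int (A p) *\<^sub>R \<iota>2 (rh p) + of_int (B p) *\<^sub>R \<iota>2 (sh p))"
      using E2.ismul_nat[OF x, of 3] E2.isum[of A B UNIV] e by simp
    have "3 *\<^sub>R \<Phi> (\<iota>1 x) = \<Phi> (3 *\<^sub>R \<iota>1 x)" using linear_scale[OF lin] by simp
    also have "\<dots> = (\<Sum>p\<in>UNIV. of_int (A p) *\<^sub>R \<Phi> (\<iota>1 (rh p)) + of_int (B p) *\<^sub>R \<Phi> (\<iota>1 (sh p)))"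
      unfolding a1 by (simp add: linear_sum[OF lin] linear_add[OF lin] linear_scale[OF lin])
    also have "\<dots> = 3 *\<^sub>R \<iota>2 x" unfolding a2 using onX by simp
    finally show ?thesis by simp
  qed
  have PhiN: "\<Phi> v \<in> N" if v: "v \<in> N" for v
  proof -
    have qv: "qd v" using qdN[OF v] .
    have q: "qd (\<Phi> v)" unfolding \<Phi>_def by (rule Phi_qd[OF sp1 sp' injpi qv])
    have cvC: "cw v \<in> CC" unfolding CC_def using v by blast
    obtain c' where c': "c' \<in> CC" "\<forall>j\<in>- (- E1.S). c' (\<rho> j) = \<delta> j * cw v j" "\<forall>t\<in>- E1.S. c' (\<tau> t) = \<epsilon> t * cw v t"
      using ext[OF cvC] by blast
    have "cl (\<pi> j) (\<Phi> v) = c' (\<pi> j)" for j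
    proof -
      have pc: "cl (\<pi> j) (\<Phi> v) = psg (\<pi> j) (X' j) (Y' j) * psg j (E1.XX j) (E1.YY j) * cl j v"
        unfolding \<Phi>_def by (rule Phi_cl[OF sp1 sp' injpi qv])
      show ?thesis
      proof (cases "j \<in> E1.S")
        case True
        then obtain p where j: "j = E1.\<sigma> p" by blast
        have "c' (\<pi> j) = \<delta> j * cw v j" using c'(2) True unfolding \<pi>_def by auto
        then show ?thesis using pc unfolding j pi_s X's E1.XY_sig delta_s cw_def
          by (simp add: \<psi>1_def \<psi>2_def pi_s)
      next
        case False
        have "c' (\<pi> j) = \<epsilon> j * cw v j" using c'(3) False pi_t[OF False] by auto
        moreover have "psg j (E1.XX j) (E1.YY j) = 1" using E1.XY_out[OF False] psg_ab by simp
        ultimately show ?thesis using pc psg_t[OF False] unfolding cw_def by simp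
      qed
    qed
    moreover have "surj \<pi>" using injpi by (simp add: finite_UNIV_inj_surj)
    ultimately have "cw (\<Phi> v) = c'" unfolding cw_def fun_eq_iff by (metis surjD)
    then show ?thesis using memN[OF q] c'(1) by simp
  qed
  have "\<Phi> ` N = N"
  proof
    show "\<Phi> ` N \<subseteq> N" using PhiN by blast
    show "N \<subseteq> \<Phi> ` N"
    proof
      fix w assume w: "w \<in> N"
      obtain v where v: "w = \<Phi> v" using orthogonal_transformation_surj[OF ot] by (metis surjD)
      have "\<forall>y\<in>N. v \<bullet> y \<in> \<int>"
      proof
        fix y assume y: "y \<in> N"
        have "v \<bullet> y = w \<bullet> \<Phi> y" using inn v by simp
        then show "v \<bullet> y \<in> \<int>" using Nint[OF w PhiN[OF y]] by simp
      qed
      then have "v \<in> N" using dual by blast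
      then show "w \<in> \<Phi> ` N" using v by blast
    qed
  qed
  then have "lattice_aut N \<Phi>" unfolding lattice_aut_def using ot by blast
  then show ?thesis using comm by blast
qed

end

theorem mainTheorem14:
  fixes N :: "(real^24) set" and \<iota>1 \<iota>2 :: "real^3^(3 \<times> 3) \<Rightarrow> real^24"
  assumes "niemeier_A2_12 N"
    and "primitive_embedding \<iota>1 P_lattice N"
    and "primitive_embedding \<iota>2 P_lattice N"
  shows "\<exists>\<Phi>. lattice_aut N \<Phi> \<and> (\<forall>x\<in>P_lattice. \<Phi> (\<iota>1 x) = \<iota>2 x)"
proof -
  from assms(1) have eu: "even_unimodular24 N" and rs: "root_system_A2_12 N"
    unfolding niemeier_A2_12_def by auto
  from rs obtain a b :: "12 \<Rightarrow> real^24" where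
    ab: "\<forall>i. a i \<bullet> a i = 2 \<and> b i \<bullet> b i = 2 \<and> a i \<bullet> b i = -1" and
    o: "\<forall>i j. i \<noteq> j \<longrightarrow> a i \<bullet> a j = 0 \<and> a i \<bullet> b j = 0 \<and> b i \<bullet> b j = 0" and
    r: "lattice_roots N = (\<Union>i. {a i, - a i, b i, - b i, a i + b i, - (a i + b i)})"
    unfolding root_system_A2_12_def by blast
  have nl: "NL N a b"
  proof
    show "(\<forall>y\<in>N. x \<bullet> y \<in> \<int>) \<longleftrightarrow> x \<in> N" for x using eu unfolding even_unimodular24_def by blast
    show "x \<in> N \<Longrightarrow> \<exists>k::int. x \<bullet> x = 2 * of_int k" for x using eu unfolding even_unimodular24_def by blast
    show "a i \<bullet> a i = 2" "b i \<bullet> b i = 2" "a i \<bullet> b i = -1" for i using ab by auto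
    show "i \<noteq> j \<Longrightarrow> a i \<bullet> a j = 0 \<and> a i \<bullet> b j = 0 \<and> b i \<bullet> b j = 0" for i j using o by blast
    show "lattice_roots N = (\<Union>i. {a i, - a i, b i, - b i, a i + b i, - (a i + b i)})" by (rule r)
  qed
  have e1: "NLe N a b \<iota>1" by (rule NLe.intro[OF nl]) (unfold_locales, rule assms(2))
  have e2: "NLe N a b \<iota>2" by (rule NLe.intro[OF nl]) (unfold_locales, rule assms(3))
  show ?thesis by (rule NL.main_NL[OF nl e1 e2])
qed

end
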